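(* Fix $\theta>0$. For each positive integer $m$, if $\sigma$ is drawn from the Ewens measure $\mathbb{P}_{\theta,n}$ on $\mathfrak{S}_n$, then as $n\to\infty$, \[\mathbb{E}_{\theta,n}\big(\mathsf{invol}(\sigma)\,\big|\,K(\sigma)=m\big) = \frac{n^m}{m!\,\log^{m-1} n}\left(1 + O\!\left(\frac{1}{\log n}\right)\right).\]
   Context: For $\sigma\in\mathfrak{S}_n$, $\mathsf{invol}(\sigma)$ is the number of ordered pairs $(\tau_1,\tau_2)$ of involutions in $\mathfrak{S}_n$ with $\sigma=\tau_2\circ\tau_1$, and $K(\sigma)$ is the number of cycles of $\sigma$. For $\theta>0$, the Ewens measure on $\mathfrak{S}_n$ is $\mathbb{P}_{\theta,n}(\sigma=\sigma_0)=\theta^{K(\sigma_0)}/\theta^{(n)}$ with $\theta^{(n)}=\theta(\theta+1)\cdots(\theta+n-1)$. *)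

theory Defs
  imports "HOL-Combinatorics.Permutations" "HOL-Library.Landau_Symbols" Complex_Main
begin

definition Sym :: "nat \<Rightarrow> (nat \<Rightarrow> nat) set" where
  "Sym n = {\<sigma>. \<sigma> permutes {..<n}}"

definition invol :: "nat \<Rightarrow> (nat \<Rightarrow> nat) \<Rightarrow> nat" where
  "invol n \<sigma> = card {(\<tau>1, \<tau>2). \<tau>1 \<in> Sym n \<and> \<tau>2 \<in> Sym n \<and>
       \<tau>1 \<circ> \<tau>1 = id \<and> \<tau>2 \<circ> \<tau>2 = id \<and> \<sigma> = \<tau>2 \<circ> \<tau>1}"

definition Kcyc :: "nat \<Rightarrow> (nat \<Rightarrow> nat) \<Rightarrow> nat" where
  "Kcyc n \<sigma> = card ((\<lambda>x. {(\<sigma> ^^ k) x | k. True}) ` {..<n})"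

definition ewens :: "real \<Rightarrow> nat \<Rightarrow> (nat \<Rightarrow> nat) \<Rightarrow> real" where
  "ewens \<theta> n \<sigma> = (if \<sigma> \<in> Sym n then \<theta> ^ Kcyc n \<sigma> / pochhammer \<theta> n else 0)"

definition cond_exp_invol :: "real \<Rightarrow> nat \<Rightarrow> nat \<Rightarrow> real" where
  "cond_exp_invol \<theta> n m =
     (\<Sum>\<sigma>\<in>{\<sigma>\<in>Sym n. Kcyc n \<sigma> = m}. ewens \<theta> n \<sigma> * real (invol n \<sigma>)) /
     (\<Sum>\<sigma>\<in>{\<sigma>\<in>Sym n. Kcyc n \<sigma> = m}. ewens \<theta> n \<sigma>)"

end

theory Submission
  imports Defs "HOL-Combinatorics.Cycles" "HOL-Analysis.Harmonic_Numbers"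
begin


definition orb :: "(nat \<Rightarrow> nat) \<Rightarrow> nat \<Rightarrow> nat set" where
  "orb \<sigma> x = {(\<sigma> ^^ k) x | k. True}"

definition orbs :: "nat \<Rightarrow> (nat \<Rightarrow> nat) \<Rightarrow> nat set set" where
  "orbs n \<sigma> = orb \<sigma> ` {..<n}"

lemma Kcyc_orbs: "Kcyc n \<sigma> = card (orbs n \<sigma>)"
  unfolding Kcyc_def orbs_def orb_def by simp

lemma orb_self[simp]: "x \<in> orb \<sigma> x"
  unfolding orb_def by (auto intro: exI[of _ 0])

lemma orb_funpow: "(\<sigma> ^^ k) x \<in> orb \<sigma> x"
  unfolding orb_def by auto

lemma orb_step: "y \<in> orb \<sigma> x \<Longrightarrow> \<sigma> y \<in> orb \<sigma> x"
  unfolding orb_def by clarsimp (metis funpow.simps(2) comp_apply)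

lemma orb_min:
  assumes "x \<in> A" "\<And>y. y \<in> A \<Longrightarrow> \<sigma> y \<in> A"
  shows "orb \<sigma> x \<subseteq> A"
proof
  fix y assume "y \<in> orb \<sigma> x"
  then obtain k where y: "y = (\<sigma> ^^ k) x" unfolding orb_def by auto
  have "(\<sigma> ^^ k) x \<in> A" by (induction k) (use assms in auto)
  thus "y \<in> A" using y by simp
qed

lemma perm_nilp:
  assumes "\<sigma> permutes S" "finite S"
  obtains N where "\<sigma> ^^ N = id" "N > 0"
  using permutation_is_nilpotent[OF permutes_imp_permutation[OF assms(2,1)]] by blast

lemma orb_sym:
  assumes "\<sigma> permutes S" "finite S" "y \<in> orb \<sigma> x"
  shows "x \<in> orb \<sigma> y"
proof -
  obtain N where N: "\<sigma> ^^ N = id" "N > 0" using perm_nilp[OF assms(1,2)] .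
  obtain k where y: "y = (\<sigma> ^^ k) x" using assms(3) unfolding orb_def by auto
  have "(\<sigma> ^^ ((N - 1) * k)) y = (\<sigma> ^^ ((N - 1) * k + k)) x"
    by (simp add: y funpow_add)
  also have "(N - 1) * k + k = N * k" using N(2) by (cases N) auto
  also have "(\<sigma> ^^ (N * k)) x = x" by (metis funpow_mult N(1) id_funpow id_apply)
  finally show ?thesis using orb_funpow by metis
qed

lemma orb_trans: "y \<in> orb \<sigma> x \<Longrightarrow> orb \<sigma> y \<subseteq> orb \<sigma> x"
  by (rule orb_min) (auto intro: orb_step)

lemma orb_eq:
  assumes "\<sigma> permutes S" "finite S" "y \<in> orb \<sigma> x"
  shows "orb \<sigma> y = orb \<sigma> x"
  using orb_trans[OF assms(3)] orb_trans[OF orb_sym[OF assms]] by blast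

lemma orb_subset: "\<sigma> permutes S \<Longrightarrow> x \<in> S \<Longrightarrow> orb \<sigma> x \<subseteq> S"
  by (rule orb_min) (auto simp: permutes_in_image)

lemma orb_out: "\<sigma> permutes S \<Longrightarrow> x \<notin> S \<Longrightarrow> orb \<sigma> x = {x}"
  using orb_min[of x "{x}" \<sigma>] by (auto simp: permutes_not_in)

lemma Sym_permutes: "\<sigma> \<in> Sym n \<longleftrightarrow> \<sigma> permutes {..<n}"
  by (simp add: Sym_def)

lemma orbs_finite: "finite (orbs n \<sigma>)" by (simp add: orbs_def)

lemma orbs_sub: "\<sigma> permutes {..<n} \<Longrightarrow> C \<in> orbs n \<sigma> \<Longrightarrow> C \<subseteq> {..<n}"
  using orb_subset[of \<sigma> "{..<n}"] unfolding orbs_def by auto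

lemma orbs_fin: "\<sigma> permutes {..<n} \<Longrightarrow> C \<in> orbs n \<sigma> \<Longrightarrow> finite C"
  using orbs_sub[of \<sigma> n C] finite_subset[of C "{..<n}"] by auto

lemma orbs_ne: "C \<in> orbs n \<sigma> \<Longrightarrow> C \<noteq> {}"
  unfolding orbs_def using orb_self[of _ \<sigma>] by (metis empty_iff imageE)

lemma orbs_fiber:
  assumes "\<sigma> permutes {..<n}" "C \<in> orbs n \<sigma>"
  shows "{x\<in>{..<n}. orb \<sigma> x = C} = C"
proof -
  obtain y where y: "y < n" "C = orb \<sigma> y" using assms(2) unfolding orbs_def by auto
  show ?thesis
  proof
    show "{x \<in> {..<n}. orb \<sigma> x = C} \<subseteq> C" by auto
    show "C \<subseteq> {x \<in> {..<n}. orb \<sigma> x = C}"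
    proof
      fix x assume x: "x \<in> C"
      have "orb \<sigma> x = C" using orb_eq[OF assms(1) _, of x y] x y by simp
      moreover have "x < n" using orb_subset[OF assms(1), of y] x y by auto
      ultimately show "x \<in> {x \<in> {..<n}. orb \<sigma> x = C}" by simp
    qed
  qed
qed

lemma sum_orbs:
  fixes g :: "nat set \<Rightarrow> real"
  assumes "\<sigma> permutes {..<n}"
  shows "(\<Sum>x<n. g (orb \<sigma> x)) = (\<Sum>C\<in>orbs n \<sigma>. real (card C) * g C)"
proof -
  have "(\<Sum>x<n. g (orb \<sigma> x)) = (\<Sum>C\<in>orbs n \<sigma>. \<Sum>x\<in>{x\<in>{..<n}. orb \<sigma> x = C}. g (orb \<sigma> x))"
    unfolding orbs_def using sum.image_gen[of "{..<n}" "\<lambda>x. g (orb \<sigma> x)" "orb \<sigma>"] by simp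
  also have "\<dots> = (\<Sum>C\<in>orbs n \<sigma>. \<Sum>x\<in>{x\<in>{..<n}. orb \<sigma> x = C}. g C)"
    by (intro sum.cong refl) auto
  also have "\<dots> = (\<Sum>C\<in>orbs n \<sigma>. real (card C) * g C)"
    using orbs_fiber[OF assms] by simp
  finally show ?thesis .
qed

lemma sum_card_orbs:
  assumes "\<sigma> permutes {..<n}"
  shows "(\<Sum>C\<in>orbs n \<sigma>. real (card C)) = real n"
proof -
  have "(\<Sum>x<n. (\<lambda>_. 1::real) (orb \<sigma> x)) = (\<Sum>C\<in>orbs n \<sigma>. real (card C) * 1)"
    by (rule sum_orbs[OF assms])
  thus ?thesis by simp
qed


lemma orb_transp_j:
  assumes \<sigma>: "\<sigma> permutes {..<n}" and j: "j < n"
  shows "orb (Transposition.transpose n j \<circ> \<sigma>) j = insert n (orb \<sigma> j)"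
proof -
  let ?s = "Transposition.transpose n j \<circ> \<sigma>"
  have s: "?s permutes {..<Suc n}"
    by (rule permutes_compose[OF permutes_subset[OF \<sigma>]]) (use j in \<open>auto intro!: permutes_swap_id\<close>)
  have sn: "?s n = j" using \<sigma> by (simp add: permutes_not_in)
  have "orb ?s j \<subseteq> insert n (orb \<sigma> j)"
  proof (rule orb_min)
    fix y assume "y \<in> insert n (orb \<sigma> j)"
    then consider "y = n" | "y \<in> orb \<sigma> j" by blast
    thus "?s y \<in> insert n (orb \<sigma> j)"
    proof cases
      case 1 thus ?thesis using sn by simp
    next
      case 2
      have "\<sigma> y \<in> orb \<sigma> j" using orb_step[OF 2] .
      thus ?thesis by (auto simp: Transposition.transpose_def)
    qed
  qed simp
  moreover have nin: "n \<in> orb ?s j"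
  proof -
    have "j \<in> orb ?s n" using orb_step[OF orb_self[of n ?s]] sn by simp
    thus ?thesis using orb_sym[OF s] by blast
  qed
  moreover have "orb \<sigma> j \<subseteq> orb ?s j"
  proof (rule orb_min)
    fix y assume y: "y \<in> orb ?s j"
    have sy: "?s y \<in> orb ?s j" using orb_step[OF y] .
    have eq: "\<sigma> y = Transposition.transpose n j (?s y)" by simp
    show "\<sigma> y \<in> orb ?s j"
      using sy nin unfolding eq by (auto simp: Transposition.transpose_def)
  qed simp
  ultimately show ?thesis by blast
qed

lemma orb_transp_other:
  assumes \<sigma>: "\<sigma> permutes {..<n}" and j: "j < n" and x: "x < n" "x \<notin> orb \<sigma> j"
  shows "orb (Transposition.transpose n j \<circ> \<sigma>) x = orb \<sigma> x"
proof -
  let ?s = "Transposition.transpose n j \<circ> \<sigma>"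
  have jn: "j \<notin> orb \<sigma> x"
  proof
    assume "j \<in> orb \<sigma> x"
    hence "orb \<sigma> j = orb \<sigma> x" using orb_eq[OF \<sigma>] by simp
    thus False using x orb_self[of x \<sigma>] by simp
  qed
  have sub: "orb \<sigma> x \<subseteq> {..<n}" using orb_subset[OF \<sigma>] x by simp
  have agree: "?s y = \<sigma> y" if "y \<in> orb \<sigma> x" for y
  proof -
    have "\<sigma> y \<in> orb \<sigma> x" using orb_step[OF that] .
    hence "\<sigma> y \<noteq> j" "\<sigma> y \<noteq> n" using jn sub by auto
    thus ?thesis by (simp add: Transposition.transpose_def)
  qed
  have 1: "orb ?s x \<subseteq> orb \<sigma> x"
  proof (rule orb_min)
    fix y assume "y \<in> orb \<sigma> x"
    thus "?s y \<in> orb \<sigma> x" using agree orb_step by metis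
  qed simp
  have 2: "orb \<sigma> x \<subseteq> orb ?s x"
  proof (rule orb_min)
    fix y assume "y \<in> orb ?s x"
    hence "y \<in> orb \<sigma> x" "?s y \<in> orb ?s x" using 1 orb_step[of y ?s x] by auto
    thus "\<sigma> y \<in> orb ?s x" using agree by simp
  qed simp
  from 1 2 show ?thesis by blast
qed

lemma orbs_transp:
  assumes \<sigma>: "\<sigma> permutes {..<n}" and j: "j < n"
  shows "orbs (Suc n) (Transposition.transpose n j \<circ> \<sigma>) =
         insert (insert n (orb \<sigma> j)) (orbs n \<sigma> - {orb \<sigma> j})"
proof -
  let ?s = "Transposition.transpose n j \<circ> \<sigma>"
  have s: "?s permutes {..<Suc n}"
    by (rule permutes_compose[OF permutes_subset[OF \<sigma>]]) (use j in \<open>auto intro!: permutes_swap_id\<close>)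
  have oj: "orb ?s j = insert n (orb \<sigma> j)" using orb_transp_j[OF \<sigma> j] .
  show ?thesis
  proof (rule set_eqI, rule iffI)
    fix C assume "C \<in> orbs (Suc n) ?s"
    then obtain x where x: "x < Suc n" "C = orb ?s x" unfolding orbs_def by auto
    show "C \<in> insert (insert n (orb \<sigma> j)) (orbs n \<sigma> - {orb \<sigma> j})"
    proof (cases "x \<in> insert n (orb \<sigma> j)")
      case True
      hence "x \<in> orb ?s j" using oj by simp
      hence "orb ?s x = orb ?s j" using orb_eq[OF s, of x j] by simp
      thus ?thesis using x oj by simp
    next
      case False
      hence xn: "x < n" "x \<notin> orb \<sigma> j" using x by auto
      have "C = orb \<sigma> x" using x orb_transp_other[OF \<sigma> j xn] by simp
      moreover have "orb \<sigma> x \<noteq> orb \<sigma> j" using xn(2) orb_self[of x \<sigma>] by auto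
      ultimately show ?thesis using xn unfolding orbs_def by auto
    qed
  next
    fix C assume C: "C \<in> insert (insert n (orb \<sigma> j)) (orbs n \<sigma> - {orb \<sigma> j})"
    show "C \<in> orbs (Suc n) ?s"
    proof (cases "C = insert n (orb \<sigma> j)")
      case True
      have "j \<in> {..<Suc n}" using j by simp
      hence "orb ?s j \<in> orbs (Suc n) ?s" unfolding orbs_def by (rule imageI)
      thus ?thesis using True oj by simp
    next
      case False
      then obtain x where x: "x < n" "C = orb \<sigma> x" "orb \<sigma> x \<noteq> orb \<sigma> j"
        using C unfolding orbs_def by auto
      have "x \<notin> orb \<sigma> j" using x(3) orb_eq[OF \<sigma>, of x j] by auto
      hence "C = orb ?s x" using orb_transp_other[OF \<sigma> j x(1)] x by simp
      thus ?thesis using x unfolding orbs_def by auto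
    qed
  qed
qed

lemma orbs_fix:
  assumes \<sigma>: "\<sigma> permutes {..<n}"
  shows "orbs (Suc n) \<sigma> = insert {n} (orbs n \<sigma>)"
  using orb_out[OF \<sigma>, of n] unfolding orbs_def by (simp add: lessThan_Suc)

lemma n_notin_orbs:
  assumes \<sigma>: "\<sigma> permutes {..<n}" and "C \<in> orbs n \<sigma>"
  shows "n \<notin> C"
  using orbs_sub[OF assms] by auto

lemma Kcyc_transp:
  assumes \<sigma>: "\<sigma> permutes {..<n}" and j: "j < n"
  shows "Kcyc (Suc n) (Transposition.transpose n j \<circ> \<sigma>) = Kcyc n \<sigma>"
proof -
  have j1: "orb \<sigma> j \<in> orbs n \<sigma>" using j unfolding orbs_def by auto
  have "insert n (orb \<sigma> j) \<notin> orbs n \<sigma> - {orb \<sigma> j}"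
    using n_notin_orbs[OF \<sigma>, of "insert n (orb \<sigma> j)"] by auto
  hence "card (insert (insert n (orb \<sigma> j)) (orbs n \<sigma> - {orb \<sigma> j})) = Suc (card (orbs n \<sigma> - {orb \<sigma> j}))"
    by (simp add: orbs_finite)
  also have "\<dots> = card (orbs n \<sigma>)"
    using card_Suc_Diff1[OF orbs_finite j1] .
  finally show ?thesis unfolding Kcyc_orbs orbs_transp[OF \<sigma> j] .
qed

lemma Kcyc_fix:
  assumes \<sigma>: "\<sigma> permutes {..<n}"
  shows "Kcyc (Suc n) \<sigma> = Suc (Kcyc n \<sigma>)"
proof -
  have "{n} \<notin> orbs n \<sigma>" using n_notin_orbs[OF \<sigma>, of "{n}"] by auto
  thus ?thesis unfolding Kcyc_orbs orbs_fix[OF \<sigma>] by (simp add: orbs_finite)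
qed


definition Pf :: "nat set set \<Rightarrow> real" where "Pf R = (\<Prod>C\<in>R. real (card C))"
definition Qf :: "nat set set \<Rightarrow> real" where "Qf R = (\<Sum>C\<in>R. Pf (R - {C}))"

lemma Pf_empty[simp]: "Pf {} = 1" by (simp add: Pf_def)
lemma Qf_empty[simp]: "Qf {} = 0" by (simp add: Qf_def)

lemma Pf_insert: "finite R \<Longrightarrow> a \<notin> R \<Longrightarrow> Pf (insert a R) = real (card a) * Pf R"
  by (simp add: Pf_def)

lemma Qf_insert:
  assumes "finite R" "a \<notin> R"
  shows "Qf (insert a R) = Pf R + real (card a) * Qf R"
proof -
  have "Qf (insert a R) = Pf (insert a R - {a}) + (\<Sum>C\<in>R. Pf (insert a R - {C}))"
    unfolding Qf_def using assms by (simp add: sum.insert)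
  also have "insert a R - {a} = R" using assms by auto
  also have "(\<Sum>C\<in>R. Pf (insert a R - {C})) = (\<Sum>C\<in>R. real (card a) * Pf (R - {C}))"
  proof (rule sum.cong[OF refl])
    fix C assume "C \<in> R"
    hence "insert a R - {C} = insert a (R - {C})" using assms by auto
    thus "Pf (insert a R - {C}) = real (card a) * Pf (R - {C})"
      using assms by (simp add: Pf_insert)
  qed
  finally show ?thesis by (simp add: Qf_def sum_distrib_left)
qed

lemma Pf_remove: "finite R \<Longrightarrow> C \<in> R \<Longrightarrow> Pf R = real (card C) * Pf (R - {C})"
  using Pf_insert[of "R - {C}" C] by (simp add: insert_absorb)

lemma Qf_remove: "finite R \<Longrightarrow> C \<in> R \<Longrightarrow> Qf R = Pf (R - {C}) + real (card C) * Qf (R - {C})"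
  using Qf_insert[of "R - {C}" C] by (simp add: insert_absorb)

lemma Pf_nonneg: "Pf R \<ge> 0" by (simp add: Pf_def prod_nonneg)
lemma Qf_nonneg: "Qf R \<ge> 0" by (simp add: Qf_def sum_nonneg Pf_nonneg)

lemma sum_Sym_Suc:
  fixes f :: "(nat \<Rightarrow> nat) \<Rightarrow> real"
  shows "(\<Sum>\<sigma>'\<in>Sym (Suc n). f \<sigma>') =
         (\<Sum>\<sigma>\<in>Sym n. f \<sigma> + (\<Sum>j<n. f (Transposition.transpose n j \<circ> \<sigma>)))"
proof -
  have "(\<Sum>\<sigma>'\<in>Sym (Suc n). f \<sigma>') = (\<Sum>\<sigma>'\<in>{p. p permutes insert n {..<n}}. f \<sigma>')"
    by (simp add: Sym_def lessThan_Suc)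
  also have "\<dots> = (\<Sum>b\<in>insert n {..<n}. \<Sum>q\<in>{p. p permutes {..<n}}. f (Transposition.transpose n b \<circ> q))"
    by (rule sum_over_permutations_insert) auto
  also have "\<dots> = (\<Sum>q\<in>Sym n. f q) + (\<Sum>b<n. \<Sum>q\<in>Sym n. f (Transposition.transpose n b \<circ> q))"
    by (simp add: Sym_def)
  also have "(\<Sum>b<n. \<Sum>q\<in>Sym n. f (Transposition.transpose n b \<circ> q)) =
             (\<Sum>q\<in>Sym n. \<Sum>b<n. f (Transposition.transpose n b \<circ> q))"
    by (rule sum.swap)
  finally show ?thesis by (simp add: sum.distrib)
qed

definition Sm :: "(nat set set \<Rightarrow> real) \<Rightarrow> nat \<Rightarrow> nat \<Rightarrow> real" where
  "Sm F n m = (\<Sum>\<sigma>\<in>{\<sigma>\<in>Sym n. Kcyc n \<sigma> = m}. F (orbs n \<sigma>))"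

lemma finite_Sym: "finite (Sym n)"
  unfolding Sym_def by (rule finite_permutations) simp

lemma Sm_alt: "Sm F n m = (\<Sum>\<sigma>\<in>Sym n. if Kcyc n \<sigma> = m then F (orbs n \<sigma>) else 0)"
  unfolding Sm_def by (rule sum.inter_filter[OF finite_Sym])

lemma Sm_Suc:
  "Sm F (Suc n) m =
    (\<Sum>\<sigma>\<in>Sym n. (if Suc (Kcyc n \<sigma>) = m then F (insert {n} (orbs n \<sigma>)) else 0) +
       (if Kcyc n \<sigma> = m then
          (\<Sum>C\<in>orbs n \<sigma>. real (card C) * F (insert (insert n C) (orbs n \<sigma> - {C}))) else 0))"
proof -
  have "Sm F (Suc n) m = (\<Sum>\<sigma>\<in>Sym n.
      (if Kcyc (Suc n) \<sigma> = m then F (orbs (Suc n) \<sigma>) else 0) +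
      (\<Sum>j<n. if Kcyc (Suc n) (Transposition.transpose n j \<circ> \<sigma>) = m
               then F (orbs (Suc n) (Transposition.transpose n j \<circ> \<sigma>)) else 0))"
    unfolding Sm_alt by (rule sum_Sym_Suc)
  also have "\<dots> = (\<Sum>\<sigma>\<in>Sym n. (if Suc (Kcyc n \<sigma>) = m then F (insert {n} (orbs n \<sigma>)) else 0) +
       (if Kcyc n \<sigma> = m then
          (\<Sum>C\<in>orbs n \<sigma>. real (card C) * F (insert (insert n C) (orbs n \<sigma> - {C}))) else 0))"
  proof (rule sum.cong[OF refl], goal_cases)
    case (1 \<sigma>)
    hence \<sigma>: "\<sigma> permutes {..<n}" by (simp add: Sym_def)
    have 1: "(if Kcyc (Suc n) \<sigma> = m then F (orbs (Suc n) \<sigma>) else 0) =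
             (if Suc (Kcyc n \<sigma>) = m then F (insert {n} (orbs n \<sigma>)) else 0)"
      by (simp add: Kcyc_fix[OF \<sigma>] orbs_fix[OF \<sigma>])
    have "(\<Sum>j<n. if Kcyc (Suc n) (Transposition.transpose n j \<circ> \<sigma>) = m
               then F (orbs (Suc n) (Transposition.transpose n j \<circ> \<sigma>)) else 0) =
          (\<Sum>j<n. if Kcyc n \<sigma> = m then F (insert (insert n (orb \<sigma> j)) (orbs n \<sigma> - {orb \<sigma> j})) else 0)"
      by (intro sum.cong refl) (simp add: Kcyc_transp[OF \<sigma>] orbs_transp[OF \<sigma>])
    also have 2: "\<dots> = (if Kcyc n \<sigma> = m then
          (\<Sum>C\<in>orbs n \<sigma>. real (card C) * F (insert (insert n C) (orbs n \<sigma> - {C}))) else 0)"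
      using sum_orbs[OF \<sigma>, of "\<lambda>C. if Kcyc n \<sigma> = m then F (insert (insert n C) (orbs n \<sigma> - {C})) else 0"]
      by (simp add: sum_distrib_left[symmetric] mult_ac if_distrib cong: if_cong)
    finally show ?case using 1 by simp
  qed
  finally show ?thesis .
qed


lemma Sym_0: "Sym 0 = {id}" by (auto simp: Sym_def)

lemma Sm_0: "Sm F 0 m = (if m = 0 then F {} else 0)"
  by (simp add: Sm_alt Sym_0 Kcyc_orbs orbs_def)

lemma orbs_facts:
  assumes \<sigma>: "\<sigma> permutes {..<n}" and C: "C \<in> orbs n \<sigma>"
  shows "finite C" "n \<notin> C" "card (insert n C) = Suc (card C)"
        "insert n C \<notin> orbs n \<sigma> - {C}"
proof -
  show f: "finite C" using orbs_fin[OF \<sigma> C] .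
  show nC: "n \<notin> C" using n_notin_orbs[OF \<sigma> C] .
  show "card (insert n C) = Suc (card C)" using f nC by simp
  show "insert n C \<notin> orbs n \<sigma> - {C}" using n_notin_orbs[OF \<sigma>, of "insert n C"] by auto
qed

lemma sing_notin: "\<sigma> permutes {..<n} \<Longrightarrow> {n} \<notin> orbs n \<sigma>"
  using n_notin_orbs[of \<sigma> n "{n}"] by auto

lemma Sm_Suc_split:
  assumes "\<And>\<sigma>. \<sigma> permutes {..<n} \<Longrightarrow> Kcyc n \<sigma> = m \<Longrightarrow> F (insert {n} (orbs n \<sigma>)) = G1 (orbs n \<sigma>)"
      and "\<And>\<sigma>. \<sigma> permutes {..<n} \<Longrightarrow> Kcyc n \<sigma> = Suc m \<Longrightarrow>
              (\<Sum>C\<in>orbs n \<sigma>. real (card C) * F (insert (insert n C) (orbs n \<sigma> - {C}))) = G2 (orbs n \<sigma>)"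
  shows "Sm F (Suc n) (Suc m) = Sm G1 n m + Sm G2 n (Suc m)"
proof -
  have "Sm F (Suc n) (Suc m) = (\<Sum>\<sigma>\<in>Sym n. (if Kcyc n \<sigma> = m then G1 (orbs n \<sigma>) else 0) +
          (if Kcyc n \<sigma> = Suc m then G2 (orbs n \<sigma>) else 0))"
    unfolding Sm_Suc
  proof (rule sum.cong[OF refl], goal_cases)
    case (1 \<sigma>)
    hence \<sigma>: "\<sigma> permutes {..<n}" by (simp add: Sym_def)
    show ?case using assms[OF \<sigma>] by simp
  qed
  thus ?thesis by (simp add: Sm_alt sum.distrib)
qed

lemma Sm_Suc_0: "Sm F (Suc n) 0 = 0"
proof -
  have "Sm F (Suc n) 0 = (\<Sum>\<sigma>\<in>Sym n. 0)"
    unfolding Sm_Suc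
  proof (rule sum.cong[OF refl], goal_cases)
    case (1 \<sigma>)
    show ?case by (simp add: Kcyc_orbs orbs_finite)
  qed
  thus ?thesis by simp
qed

definition "Bn = Sm (\<lambda>_. 1)"
definition "Dn = Sm Pf"
definition "Vn = Sm Qf"

lemma B_rec: "Bn (Suc n) (Suc m) = Bn n m + real n * Bn n (Suc m)"
proof -
  have "Sm (\<lambda>_. 1) (Suc n) (Suc m) = Sm (\<lambda>_. 1) n m + Sm (\<lambda>_. real n) n (Suc m)"
  proof (rule Sm_Suc_split)
    fix \<sigma> assume \<sigma>: "\<sigma> permutes {..<n}"
    show "(\<Sum>C\<in>orbs n \<sigma>. real (card C) * 1) = real n" using sum_card_orbs[OF \<sigma>] by simp
  qed simp
  thus ?thesis by (simp add: Bn_def Sm_def sum_distrib_left[symmetric])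
qed

lemma D_rec: "Dn (Suc n) (Suc m) = Dn n m + real (n + Suc m) * Dn n (Suc m)"
proof -
  have "Sm Pf (Suc n) (Suc m) = Sm Pf n m + Sm (\<lambda>R. real (n + Suc m) * Pf R) n (Suc m)"
  proof (rule Sm_Suc_split)
    fix \<sigma> assume \<sigma>: "\<sigma> permutes {..<n}"
    show "Pf (insert {n} (orbs n \<sigma>)) = Pf (orbs n \<sigma>)"
      using Pf_insert[OF orbs_finite sing_notin[OF \<sigma>]] by simp
  next
    fix \<sigma> assume \<sigma>: "\<sigma> permutes {..<n}" and K: "Kcyc n \<sigma> = Suc m"
    let ?R = "orbs n \<sigma>"
    have "(\<Sum>C\<in>?R. real (card C) * Pf (insert (insert n C) (?R - {C}))) =
          (\<Sum>C\<in>?R. (real (card C) + 1) * Pf ?R)"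
    proof (rule sum.cong[OF refl])
      fix C assume C: "C \<in> ?R"
      note f = orbs_facts[OF \<sigma> C]
      have "Pf (insert (insert n C) (?R - {C})) = (real (card C) + 1) * Pf (?R - {C})"
        using Pf_insert[of "?R - {C}" "insert n C"] f orbs_finite by simp
      thus "real (card C) * Pf (insert (insert n C) (?R - {C})) = (real (card C) + 1) * Pf ?R"
        using Pf_remove[OF orbs_finite C] by simp
    qed
    also have "\<dots> = (\<Sum>C\<in>?R. (real (card C) + 1)) * Pf ?R"
      by (rule sum_distrib_right[symmetric])
    also have "(\<Sum>C\<in>?R. (real (card C) + 1)) = real n + real (card ?R)"
      using sum_card_orbs[OF \<sigma>] by (simp add: sum.distrib)
    finally show "(\<Sum>C\<in>?R. real (card C) * Pf (insert (insert n C) (?R - {C}))) =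
        real (n + Suc m) * Pf ?R" using K by (simp add: Kcyc_orbs)
  qed
  thus ?thesis by (simp add: Dn_def Sm_def sum_distrib_left[symmetric])
qed

lemma V_rec: "Vn (Suc n) (Suc m) = Vn n m + Dn n m + real (n + m) * Vn n (Suc m)"
proof -
  have "Sm Qf (Suc n) (Suc m) = Sm (\<lambda>R. Qf R + Pf R) n m + Sm (\<lambda>R. real (n + m) * Qf R) n (Suc m)"
  proof (rule Sm_Suc_split)
    fix \<sigma> assume \<sigma>: "\<sigma> permutes {..<n}"
    show "Qf (insert {n} (orbs n \<sigma>)) = Qf (orbs n \<sigma>) + Pf (orbs n \<sigma>)"
      using Qf_insert[OF orbs_finite sing_notin[OF \<sigma>]] by simp
  next
    fix \<sigma> assume \<sigma>: "\<sigma> permutes {..<n}" and K: "Kcyc n \<sigma> = Suc m"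
    let ?R = "orbs n \<sigma>"
    have "(\<Sum>C\<in>?R. real (card C) * Qf (insert (insert n C) (?R - {C}))) =
          (\<Sum>C\<in>?R. (real (card C) + 1) * Qf ?R - Pf (?R - {C}))"
    proof (rule sum.cong[OF refl])
      fix C assume C: "C \<in> ?R"
      note f = orbs_facts[OF \<sigma> C]
      have "Qf (insert (insert n C) (?R - {C})) = Pf (?R - {C}) + (real (card C) + 1) * Qf (?R - {C})"
        using Qf_insert[of "?R - {C}" "insert n C"] f orbs_finite by simp
      thus "real (card C) * Qf (insert (insert n C) (?R - {C})) = (real (card C) + 1) * Qf ?R - Pf (?R - {C})"
        using Qf_remove[OF orbs_finite C] by (simp add: algebra_simps)
    qed
    also have "\<dots> = (\<Sum>C\<in>?R. (real (card C) + 1)) * Qf ?R - (\<Sum>C\<in>?R. Pf (?R - {C}))"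
      by (simp add: sum_subtractf sum_distrib_right)
    also have "(\<Sum>C\<in>?R. (real (card C) + 1)) = real n + real (card ?R)"
      using sum_card_orbs[OF \<sigma>] by (simp add: sum.distrib)
    also have "(\<Sum>C\<in>?R. Pf (?R - {C})) = Qf ?R" by (simp add: Qf_def)
    finally show "(\<Sum>C\<in>?R. real (card C) * Qf (insert (insert n C) (?R - {C}))) =
        real (n + m) * Qf ?R" using K by (simp add: Kcyc_orbs algebra_simps)
  qed
  thus ?thesis by (simp add: Dn_def Vn_def Sm_def sum_distrib_left[symmetric] sum.distrib)
qed


definition rep :: "nat set \<Rightarrow> nat" where "rep C = (SOME x. x \<in> C)"

lemma rep_in: "C \<noteq> {} \<Longrightarrow> rep C \<in> C"
  unfolding rep_def by (rule someI_ex) auto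

definition Tset :: "nat \<Rightarrow> (nat \<Rightarrow> nat) \<Rightarrow> (nat \<Rightarrow> nat) set" where
  "Tset n \<sigma> = {\<tau>\<in>Sym n. \<tau> \<circ> \<tau> = id \<and> (\<sigma> \<circ> \<tau>) \<circ> (\<sigma> \<circ> \<tau>) = id}"

lemma invol_Tset:
  assumes "\<sigma> \<in> Sym n"
  shows "invol n \<sigma> = card (Tset n \<sigma>)"
proof -
  have eq: "{(\<tau>1, \<tau>2). \<tau>1 \<in> Sym n \<and> \<tau>2 \<in> Sym n \<and> \<tau>1 \<circ> \<tau>1 = id \<and> \<tau>2 \<circ> \<tau>2 = id \<and> \<sigma> = \<tau>2 \<circ> \<tau>1}
        = (\<lambda>\<tau>. (\<tau>, \<sigma> \<circ> \<tau>)) ` Tset n \<sigma>"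
  proof (rule set_eqI, rule iffI)
    fix p assume "p \<in> {(\<tau>1, \<tau>2). \<tau>1 \<in> Sym n \<and> \<tau>2 \<in> Sym n \<and> \<tau>1 \<circ> \<tau>1 = id \<and> \<tau>2 \<circ> \<tau>2 = id \<and> \<sigma> = \<tau>2 \<circ> \<tau>1}"
    then obtain t1 t2 where p: "p = (t1, t2)" "t1 \<in> Sym n" "t2 \<in> Sym n" "t1 \<circ> t1 = id" "t2 \<circ> t2 = id" "\<sigma> = t2 \<circ> t1"
      by blast
    have "\<sigma> \<circ> t1 = t2 \<circ> (t1 \<circ> t1)" unfolding p(6) by (simp only: o_assoc)
    hence t2: "t2 = \<sigma> \<circ> t1" using p(4) by simp
    have "t1 \<in> Tset n \<sigma>" unfolding Tset_def using p(2,4,5) t2 by blast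
    moreover have "p = (t1, \<sigma> \<circ> t1)" using p(1) t2 by blast
    ultimately show "p \<in> (\<lambda>\<tau>. (\<tau>, \<sigma> \<circ> \<tau>)) ` Tset n \<sigma>" by blast
  next
    fix p assume "p \<in> (\<lambda>\<tau>. (\<tau>, \<sigma> \<circ> \<tau>)) ` Tset n \<sigma>"
    then obtain t where t: "p = (t, \<sigma> \<circ> t)" "t \<in> Sym n" "t \<circ> t = id" "(\<sigma> \<circ> t) \<circ> (\<sigma> \<circ> t) = id"
      unfolding Tset_def by auto
    have "\<sigma> \<circ> t \<in> Sym n" using t(2) assms by (simp add: Sym_def permutes_compose)
    moreover have "\<sigma> = (\<sigma> \<circ> t) \<circ> t" using t(3) by (simp add: o_assoc[symmetric])
    ultimately show "p \<in> {(\<tau>1, \<tau>2). \<tau>1 \<in> Sym n \<and> \<tau>2 \<in> Sym n \<and> \<tau>1 \<circ> \<tau>1 = id \<and> \<tau>2 \<circ> \<tau>2 = id \<and> \<sigma> = \<tau>2 \<circ> \<tau>1}"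
      unfolding t(1) mem_Collect_eq case_prod_conv using t(2,3,4) by blast
  qed
  have "inj_on (\<lambda>\<tau>. (\<tau>, \<sigma> \<circ> \<tau>)) (Tset n \<sigma>)" by (rule inj_onI) simp
  thus ?thesis unfolding invol_def eq by (rule card_image)
qed

lemma finite_Tset: "finite (Tset n \<sigma>)"
  using finite_Sym[of n] unfolding Tset_def by (rule finite_subset[rotated]) auto

context
  fixes \<sigma> :: "nat \<Rightarrow> nat" and n :: nat
  assumes \<sigma>: "\<sigma> permutes {..<n}"
begin

lemma T_perm: "\<tau> \<in> Tset n \<sigma> \<Longrightarrow> \<tau> permutes {..<n}"
  by (simp add: Tset_def Sym_def)

lemma T_inv: "\<tau> \<in> Tset n \<sigma> \<Longrightarrow> \<tau> (\<tau> x) = x"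
  unfolding Tset_def by (metis (mono_tags, lifting) comp_apply id_apply mem_Collect_eq)

lemma T_step: "\<tau> \<in> Tset n \<sigma> \<Longrightarrow> \<tau> (\<sigma> y) = inv \<sigma> (\<tau> y)"
proof -
  assume t: "\<tau> \<in> Tset n \<sigma>"
  have "((\<sigma> \<circ> \<tau>) \<circ> (\<sigma> \<circ> \<tau>)) (\<tau> y) = \<tau> y" using t unfolding Tset_def by simp
  hence "\<sigma> (\<tau> (\<sigma> y)) = \<tau> y" using T_inv[OF t] by simp
  hence "inv \<sigma> (\<sigma> (\<tau> (\<sigma> y))) = inv \<sigma> (\<tau> y)" by simp
  thus ?thesis using permutes_inverses(2)[OF \<sigma>] by simp
qed

lemma T_pow: "\<tau> \<in> Tset n \<sigma> \<Longrightarrow> \<tau> ((\<sigma> ^^ k) x) = (inv \<sigma> ^^ k) (\<tau> x)"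
  by (induction k) (simp_all add: T_step)

lemma T_agree:
  assumes "\<tau>1 \<in> Tset n \<sigma>" "\<tau>2 \<in> Tset n \<sigma>" "\<tau>1 x = \<tau>2 x" "y \<in> orb \<sigma> x"
  shows "\<tau>1 y = \<tau>2 y"
proof -
  obtain k where "y = (\<sigma> ^^ k) x" using assms(4) unfolding orb_def by auto
  thus ?thesis using T_pow[OF assms(1)] T_pow[OF assms(2)] assms(3) by simp
qed

lemma orb_rep: "C \<in> orbs n \<sigma> \<Longrightarrow> orb \<sigma> (rep C) = C"
proof -
  assume C: "C \<in> orbs n \<sigma>"
  then obtain z where z: "z < n" "C = orb \<sigma> z" unfolding orbs_def by auto
  have "rep C \<in> C" using rep_in orbs_ne[OF C] by blast
  thus ?thesis using orb_eq[OF \<sigma>, of "rep C" z] z by simp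
qed

lemma in_orb_rep: "x < n \<Longrightarrow> x \<in> orb \<sigma> (rep (orb \<sigma> x))"
proof -
  assume x: "x < n"
  have C: "orb \<sigma> x \<in> orbs n \<sigma>" using x unfolding orbs_def by auto
  have "rep (orb \<sigma> x) \<in> orb \<sigma> x" using rep_in orbs_ne[OF C] by blast
  thus ?thesis using orb_sym[OF \<sigma>] by blast
qed

lemma T_ext:
  assumes "\<tau>1 \<in> Tset n \<sigma>" "\<tau>2 \<in> Tset n \<sigma>" "\<And>C. C \<in> orbs n \<sigma> \<Longrightarrow> \<tau>1 (rep C) = \<tau>2 (rep C)"
  shows "\<tau>1 = \<tau>2"
proof
  fix x show "\<tau>1 x = \<tau>2 x"
  proof (cases "x < n")
    case True
    have C: "orb \<sigma> x \<in> orbs n \<sigma>" using True unfolding orbs_def by auto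
    show ?thesis using T_agree[OF assms(1,2) assms(3)[OF C] in_orb_rep[OF True]] .
  next
    case False
    thus ?thesis using T_perm[OF assms(1)] T_perm[OF assms(2)] by (simp add: permutes_not_in)
  qed
qed

lemma inv_orb_sub: "orb (inv \<sigma>) y \<subseteq> orb \<sigma> y"
proof -
  obtain N where N: "\<sigma> ^^ N = id" "N > 0" using perm_nilp[OF \<sigma>] by blast
  have NS: "N = Suc (N - 1)" using N(2) by simp
  have 1: "\<sigma> \<circ> \<sigma> ^^ (N - 1) = id" using N(1) NS funpow.simps(2)[of "N - 1" \<sigma>] by simp
  have 2: "\<sigma> ^^ (N - 1) \<circ> \<sigma> = id" using N(1) NS funpow_Suc_right[of "N - 1" \<sigma>] by simp
  have "inv \<sigma> = \<sigma> ^^ (N - 1)" by (rule inv_unique_comp[OF 1 2])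
  hence "(inv \<sigma> ^^ k) y = (\<sigma> ^^ ((N - 1) * k)) y" for k by (simp add: funpow_mult)
  thus ?thesis unfolding orb_def by auto
qed

lemma T_image_orb: "\<tau> \<in> Tset n \<sigma> \<Longrightarrow> \<tau> ` orb \<sigma> x \<subseteq> orb \<sigma> (\<tau> x)"
proof
  fix z assume t: "\<tau> \<in> Tset n \<sigma>" and "z \<in> \<tau> ` orb \<sigma> x"
  then obtain k where "z = \<tau> ((\<sigma> ^^ k) x)" unfolding orb_def by auto
  hence "z = (inv \<sigma> ^^ k) (\<tau> x)" using T_pow[OF t] by simp
  hence "z \<in> orb (inv \<sigma>) (\<tau> x)" unfolding orb_def by auto
  thus "z \<in> orb \<sigma> (\<tau> x)" using inv_orb_sub by blast
qed

lemma orb_finite: "finite (orb \<sigma> x)"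
proof (cases "x < n")
  case True thus ?thesis using orb_subset[OF \<sigma>, of x] finite_subset by auto
next
  case False thus ?thesis using orb_out[OF \<sigma>, of x] by simp
qed

lemma T_card_le: "\<tau> \<in> Tset n \<sigma> \<Longrightarrow> card (orb \<sigma> x) \<le> card (orb \<sigma> (\<tau> x))"
proof -
  assume t: "\<tau> \<in> Tset n \<sigma>"
  have "inj_on \<tau> (orb \<sigma> x)" using permutes_inj[OF T_perm[OF t]] by (simp add: inj_on_def inj_def)
  hence "card (\<tau> ` orb \<sigma> x) = card (orb \<sigma> x)" by (rule card_image)
  moreover have "card (\<tau> ` orb \<sigma> x) \<le> card (orb \<sigma> (\<tau> x))"
    by (rule card_mono[OF orb_finite T_image_orb[OF t]])
  ultimately show ?thesis by simp
qed

lemma T_card_eq: "\<tau> \<in> Tset n \<sigma> \<Longrightarrow> card (orb \<sigma> (\<tau> x)) = card (orb \<sigma> x)"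
  using T_card_le[of \<tau> x] T_card_le[of \<tau> "\<tau> x"] T_inv[of \<tau> x] by simp

definition W :: "nat set \<Rightarrow> nat set" where
  "W C = \<Union>{C'\<in>orbs n \<sigma>. card C' = card C}"

lemma T_in_W: "\<tau> \<in> Tset n \<sigma> \<Longrightarrow> x < n \<Longrightarrow> \<tau> x \<in> W (orb \<sigma> x)"
proof -
  assume t: "\<tau> \<in> Tset n \<sigma>" and x: "x < n"
  have "\<tau> x < n" using permutes_in_image[OF T_perm[OF t]] x by simp
  hence "orb \<sigma> (\<tau> x) \<in> orbs n \<sigma>" unfolding orbs_def by auto
  thus ?thesis unfolding W_def using T_card_eq[OF t, of x] orb_self[of "\<tau> x" \<sigma>] by blast
qed

lemma card_W: "C \<in> orbs n \<sigma> \<Longrightarrow> card (W C) \<le> card (orbs n \<sigma>) * card C"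
proof -
  assume C: "C \<in> orbs n \<sigma>"
  let ?U = "{C'\<in>orbs n \<sigma>. card C' = card C}"
  have "card (W C) \<le> sum card ?U" unfolding W_def by (rule card_Union_le_sum_card)
  also have "sum card ?U = card ?U * card C" by simp
  also have "card ?U \<le> card (orbs n \<sigma>)" by (rule card_mono[OF orbs_finite]) auto
  finally show ?thesis by (simp add: mult_le_mono1)
qed

lemma finite_W: "finite (W C)"
  unfolding W_def using orbs_fin[OF \<sigma>] orbs_finite by auto

end


context
  fixes \<sigma> :: "nat \<Rightarrow> nat" and n :: nat
  assumes \<sigma>: "\<sigma> permutes {..<n}"
begin

lemma rep_lt: "C \<in> orbs n \<sigma> \<Longrightarrow> rep C < n"
  using rep_in[OF orbs_ne] orbs_sub[OF \<sigma>] by blast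

lemma card_PiE_orbs: "real (card (PiE (orbs n \<sigma>) (\<lambda>C. C))) = Pf (orbs n \<sigma>)"
  by (simp add: card_PiE[OF orbs_finite] Pf_def)

lemma T0_bound:
  "card {\<tau>\<in>Tset n \<sigma>. \<forall>C\<in>orbs n \<sigma>. \<tau> (rep C) \<in> C} \<le> card (PiE (orbs n \<sigma>) (\<lambda>C. C))"
proof (rule card_inj_on_le[where f = "\<lambda>\<tau>. restrict (\<lambda>C. \<tau> (rep C)) (orbs n \<sigma>)"])
  show "inj_on (\<lambda>\<tau>. restrict (\<lambda>C. \<tau> (rep C)) (orbs n \<sigma>)) {\<tau>\<in>Tset n \<sigma>. \<forall>C\<in>orbs n \<sigma>. \<tau> (rep C) \<in> C}"
  proof (rule inj_onI)
    fix t1 t2 assume t1: "t1 \<in> {\<tau>\<in>Tset n \<sigma>. \<forall>C\<in>orbs n \<sigma>. \<tau> (rep C) \<in> C}"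
      and t2: "t2 \<in> {\<tau>\<in>Tset n \<sigma>. \<forall>C\<in>orbs n \<sigma>. \<tau> (rep C) \<in> C}"
      and eq: "restrict (\<lambda>C. t1 (rep C)) (orbs n \<sigma>) = restrict (\<lambda>C. t2 (rep C)) (orbs n \<sigma>)"
    have "t1 (rep C) = t2 (rep C)" if "C \<in> orbs n \<sigma>" for C
      using fun_cong[OF eq, of C] that by simp
    thus "t1 = t2" using T_ext[OF \<sigma>] t1 t2 by blast
  qed
  show "(\<lambda>\<tau>. restrict (\<lambda>C. \<tau> (rep C)) (orbs n \<sigma>)) ` {\<tau>\<in>Tset n \<sigma>. \<forall>C\<in>orbs n \<sigma>. \<tau> (rep C) \<in> C}
        \<subseteq> PiE (orbs n \<sigma>) (\<lambda>C. C)" by auto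
  show "finite (PiE (orbs n \<sigma>) (\<lambda>C. C))"
    by (rule finite_PiE[OF orbs_finite]) (rule orbs_fin[OF \<sigma>])
qed

lemma T1_bound:
  assumes C0: "C0 \<in> orbs n \<sigma>"
  shows "card {\<tau>\<in>Tset n \<sigma>. \<tau> (rep C0) \<notin> C0} \<le> card (PiE (orbs n \<sigma> - {C0}) (W \<sigma> n))"
proof (rule card_inj_on_le[where f = "\<lambda>\<tau>. restrict (\<lambda>C. \<tau> (rep C)) (orbs n \<sigma> - {C0})"])
  show "inj_on (\<lambda>\<tau>. restrict (\<lambda>C. \<tau> (rep C)) (orbs n \<sigma> - {C0})) {\<tau>\<in>Tset n \<sigma>. \<tau> (rep C0) \<notin> C0}"
  proof (rule inj_onI)
    fix t1 t2 assume t1: "t1 \<in> {\<tau>\<in>Tset n \<sigma>. \<tau> (rep C0) \<notin> C0}"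
      and t2: "t2 \<in> {\<tau>\<in>Tset n \<sigma>. \<tau> (rep C0) \<notin> C0}"
      and eq: "restrict (\<lambda>C. t1 (rep C)) (orbs n \<sigma> - {C0}) = restrict (\<lambda>C. t2 (rep C)) (orbs n \<sigma> - {C0})"
    have T1: "t1 \<in> Tset n \<sigma>" and T2: "t2 \<in> Tset n \<sigma>" using t1 t2 by auto
    have agr: "t1 (rep C) = t2 (rep C)" if "C \<in> orbs n \<sigma>" "C \<noteq> C0" for C
      using fun_cong[OF eq, of C] that by simp
    have agx: "t1 x = t2 x" if "x < n" "orb \<sigma> x \<noteq> C0" for x
    proof -
      have C: "orb \<sigma> x \<in> orbs n \<sigma>" using that unfolding orbs_def by auto
      show ?thesis using T_agree[OF \<sigma> T1 T2 agr[OF C that(2)] in_orb_rep[OF \<sigma> that(1)]] .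
    qed
    let ?y = "t1 (rep C0)"
    have yn: "?y < n" using permutes_in_image[OF T_perm[OF \<sigma> T1]] rep_lt[OF C0] by simp
    have yC: "orb \<sigma> ?y \<noteq> C0" using t1 orb_self[of ?y \<sigma>] by auto
    have "t2 ?y = t1 ?y" using agx[OF yn yC] by simp
    also have "\<dots> = rep C0" using T_inv[OF \<sigma> T1] .
    finally have "t2 (t2 ?y) = t2 (rep C0)" by simp
    hence "t1 (rep C0) = t2 (rep C0)" using T_inv[OF \<sigma> T2] by simp
    hence "t1 (rep C) = t2 (rep C)" if "C \<in> orbs n \<sigma>" for C
      using agr that by (cases "C = C0") auto
    thus "t1 = t2" using T_ext[OF \<sigma> T1 T2] by blast
  qed
  show "(\<lambda>\<tau>. restrict (\<lambda>C. \<tau> (rep C)) (orbs n \<sigma> - {C0})) ` {\<tau>\<in>Tset n \<sigma>. \<tau> (rep C0) \<notin> C0}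
        \<subseteq> PiE (orbs n \<sigma> - {C0}) (W \<sigma> n)"
  proof
    fix f assume "f \<in> (\<lambda>\<tau>. restrict (\<lambda>C. \<tau> (rep C)) (orbs n \<sigma> - {C0})) ` {\<tau>\<in>Tset n \<sigma>. \<tau> (rep C0) \<notin> C0}"
    then obtain t where t: "t \<in> Tset n \<sigma>" and f: "f = restrict (\<lambda>C. t (rep C)) (orbs n \<sigma> - {C0})" by auto
    have "t (rep C) \<in> W \<sigma> n C" if "C \<in> orbs n \<sigma>" for C
      using T_in_W[OF \<sigma> t rep_lt[OF that]] orb_rep[OF \<sigma> that] by simp
    thus "f \<in> PiE (orbs n \<sigma> - {C0}) (W \<sigma> n)" unfolding f by auto
  qed
  show "finite (PiE (orbs n \<sigma> - {C0}) (W \<sigma> n))"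
    by (rule finite_PiE) (auto simp: orbs_finite finite_W[OF \<sigma>])
qed

lemma card_PiE_W:
  assumes C0: "C0 \<in> orbs n \<sigma>"
  shows "real (card (PiE (orbs n \<sigma> - {C0}) (W \<sigma> n))) \<le>
         real (card (orbs n \<sigma>)) ^ card (orbs n \<sigma>) * Pf (orbs n \<sigma> - {C0})"
proof -
  let ?R = "orbs n \<sigma>" and ?K = "real (card (orbs n \<sigma>))"
  have "real (card (PiE (?R - {C0}) (W \<sigma> n))) = (\<Prod>C\<in>?R - {C0}. real (card (W \<sigma> n C)))"
    by (simp add: card_PiE orbs_finite)
  also have "\<dots> \<le> (\<Prod>C\<in>?R - {C0}. ?K * real (card C))"
  proof (rule prod_mono)
    fix C assume "C \<in> ?R - {C0}"
    hence "card (W \<sigma> n C) \<le> card ?R * card C" using card_W[OF \<sigma>, of C] by simp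
    hence "real (card (W \<sigma> n C)) \<le> ?K * real (card C)"
      by (metis of_nat_le_iff of_nat_mult)
    thus "0 \<le> real (card (W \<sigma> n C)) \<and> real (card (W \<sigma> n C)) \<le> ?K * real (card C)" by simp
  qed
  also have "\<dots> = ?K ^ card (?R - {C0}) * Pf (?R - {C0})"
    by (simp add: prod.distrib Pf_def)
  also have "\<dots> \<le> ?K ^ card ?R * Pf (?R - {C0})"
  proof (rule mult_right_mono[OF _ Pf_nonneg])
    have "card ?R \<ge> 1" using C0 orbs_finite card_0_eq by (metis One_nat_def Suc_leI empty_iff neq0_conv)
    thus "?K ^ card (?R - {C0}) \<le> ?K ^ card ?R"
      by (intro power_increasing) (auto intro: card_mono orbs_finite)
  qed
  finally show ?thesis .
qed

lemma invol_upper: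
  "real (card (Tset n \<sigma>)) \<le> Pf (orbs n \<sigma>) + real (card (orbs n \<sigma>)) ^ card (orbs n \<sigma>) * Qf (orbs n \<sigma>)"
proof -
  let ?R = "orbs n \<sigma>" and ?K = "real (card (orbs n \<sigma>))"
  let ?T0 = "{\<tau>\<in>Tset n \<sigma>. \<forall>C\<in>?R. \<tau> (rep C) \<in> C}"
  let ?T1 = "\<lambda>C0. {\<tau>\<in>Tset n \<sigma>. \<tau> (rep C0) \<notin> C0}"
  have sub: "Tset n \<sigma> \<subseteq> ?T0 \<union> (\<Union>C0\<in>?R. ?T1 C0)"
  proof
    fix t assume "t \<in> Tset n \<sigma>"
    thus "t \<in> ?T0 \<union> (\<Union>C0\<in>?R. ?T1 C0)" by (cases "\<forall>C\<in>?R. t (rep C) \<in> C") auto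
  qed
  have "card (Tset n \<sigma>) \<le> card (?T0 \<union> (\<Union>C0\<in>?R. ?T1 C0))"
    by (rule card_mono[OF _ sub]) (auto intro: finite_subset[OF _ finite_Tset])
  also have "\<dots> \<le> card ?T0 + card (\<Union>C0\<in>?R. ?T1 C0)" by (rule card_Un_le)
  also have "card (\<Union>C0\<in>?R. ?T1 C0) \<le> (\<Sum>C0\<in>?R. card (?T1 C0))" by (rule card_UN_le[OF orbs_finite])
  finally have "card (Tset n \<sigma>) \<le> card ?T0 + (\<Sum>C0\<in>?R. card (?T1 C0))"
    by simp
  hence "real (card (Tset n \<sigma>)) \<le> real (card ?T0 + (\<Sum>C0\<in>?R. card (?T1 C0)))"
    by (simp only: of_nat_le_iff)
  hence "real (card (Tset n \<sigma>)) \<le> real (card ?T0) + (\<Sum>C0\<in>?R. real (card (?T1 C0)))"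
    by (simp only: of_nat_add of_nat_sum)
  also have "\<dots> \<le> Pf ?R + (\<Sum>C0\<in>?R. ?K ^ card ?R * Pf (?R - {C0}))"
  proof (rule add_mono)
    have "real (card ?T0) \<le> real (card (PiE ?R (\<lambda>C. C)))" using T0_bound by (simp only: of_nat_le_iff)
    thus "real (card ?T0) \<le> Pf ?R" unfolding card_PiE_orbs .
    show "(\<Sum>C0\<in>?R. real (card (?T1 C0))) \<le> (\<Sum>C0\<in>?R. ?K ^ card ?R * Pf (?R - {C0}))"
    proof (rule sum_mono)
      fix C0 assume C0: "C0 \<in> ?R"
      have "real (card (?T1 C0)) \<le> real (card (PiE (?R - {C0}) (W \<sigma> n)))"
        using T1_bound[OF C0] by simp
      thus "real (card (?T1 C0)) \<le> ?K ^ card ?R * Pf (?R - {C0})"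
        using card_PiE_W[OF C0] by linarith
    qed
  qed
  also have "(\<Sum>C0\<in>?R. ?K ^ card ?R * Pf (?R - {C0})) = ?K ^ card ?R * Qf ?R"
    by (simp add: Qf_def sum_distrib_left)
  finally show ?thesis .
qed

end


lemma mod_arith:
  assumes "0 < (N::nat)"
  shows "((N - 1) * ((N - 1) * e + t) + t) mod N = e mod N"
proof (cases "N = 1")
  case True thus ?thesis by simp
next
  case False
  then obtain M where M: "N = Suc M" "M \<ge> 1" using assms by (cases N) auto
  have "(N - 1) * ((N - 1) * e + t) + t = e + N * (t + (M - 1) * e)"
  proof -
    have "M * (M * e + t) + t = e + Suc M * (t + (M - 1) * e)"
    proof -
      obtain L where L: "M = Suc L" using M(2) by (cases M) auto
      show ?thesis unfolding L by (simp add: algebra_simps)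
    qed
    thus ?thesis using M by simp
  qed
  thus ?thesis by simp
qed

definition tau :: "nat \<Rightarrow> (nat \<Rightarrow> nat) \<Rightarrow> nat \<Rightarrow> (nat set \<Rightarrow> nat) \<Rightarrow> nat \<Rightarrow> nat" where
  "tau N \<sigma> n y x = (if x < n then (\<sigma> ^^ ((N - 1) * (SOME k. (\<sigma> ^^ k) (rep (orb \<sigma> x)) = x))) (y (orb \<sigma> x)) else x)"

context
  fixes \<sigma> :: "nat \<Rightarrow> nat" and n :: nat and N :: nat
  assumes \<sigma>: "\<sigma> permutes {..<n}" and N: "\<sigma> ^^ N = id" "N > 0"
begin

lemma pow_mod: "(\<sigma> ^^ a) z = (\<sigma> ^^ (a mod N)) z"
proof -
  have "(\<sigma> ^^ a) z = (\<sigma> ^^ (a mod N + N * (a div N))) z" by simp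
  also have "\<dots> = (\<sigma> ^^ (a mod N)) (((\<sigma> ^^ N) ^^ (a div N)) z)"
    by (simp only: funpow_add funpow_mult comp_apply)
  also have "\<dots> = (\<sigma> ^^ (a mod N)) z" using N(1) by simp
  finally show ?thesis .
qed

lemma pow_cong: "a mod N = b mod N \<Longrightarrow> (\<sigma> ^^ a) z = (\<sigma> ^^ b) z"
  using pow_mod[of a z] pow_mod[of b z] by simp

lemma pow_pow: "(\<sigma> ^^ a) ((\<sigma> ^^ b) z) = (\<sigma> ^^ (a + b)) z"
  by (simp add: funpow_add)

lemma WD:
  assumes C: "C \<in> orbs n \<sigma>" and y0: "y0 \<in> C"
      and ab: "(\<sigma> ^^ a) (rep C) = (\<sigma> ^^ b) (rep C)"
  shows "(\<sigma> ^^ ((N - 1) * a)) y0 = (\<sigma> ^^ ((N - 1) * b)) y0"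
proof -
  let ?r = "rep C"
  have "y0 \<in> orb \<sigma> ?r" using orb_rep[OF \<sigma> C] y0 by simp
  then obtain j where j: "y0 = (\<sigma> ^^ j) ?r" unfolding orb_def by auto
  define c where "c = (N - 1) * a + (N - 1) * b + j"
  have "(\<sigma> ^^ (c + a)) ?r = (\<sigma> ^^ (c + b)) ?r"
    using ab by (simp add: pow_pow[symmetric])
  moreover have "(\<sigma> ^^ (c + a)) ?r = (\<sigma> ^^ ((N - 1) * b + j)) ?r"
  proof (rule pow_cong)
    have "c + a = ((N - 1) * b + j) + N * a" unfolding c_def using N(2)
      by (cases N) (auto simp: algebra_simps)
    thus "(c + a) mod N = ((N - 1) * b + j) mod N" by simp
  qed
  moreover have "(\<sigma> ^^ (c + b)) ?r = (\<sigma> ^^ ((N - 1) * a + j)) ?r"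
  proof (rule pow_cong)
    have "c + b = ((N - 1) * a + j) + N * b" unfolding c_def using N(2)
      by (cases N) (auto simp: algebra_simps)
    thus "(c + b) mod N = ((N - 1) * a + j) mod N" by simp
  qed
  ultimately show ?thesis unfolding j by (simp add: pow_pow)
qed

context
  fixes y :: "nat set \<Rightarrow> nat"
  assumes y: "\<And>C. C \<in> orbs n \<sigma> \<Longrightarrow> y C \<in> C"
begin

lemma tau_pow:
  assumes C: "C \<in> orbs n \<sigma>"
  shows "tau N \<sigma> n y ((\<sigma> ^^ e) (rep C)) = (\<sigma> ^^ ((N - 1) * e)) (y C)"
proof -
  let ?x = "(\<sigma> ^^ e) (rep C)"
  have xo: "?x \<in> orb \<sigma> (rep C)" by (rule orb_funpow)
  hence xC: "?x \<in> C" using orb_rep[OF \<sigma> C] by simp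
  have xn: "?x < n" using xC orbs_sub[OF \<sigma> C] by auto
  have ox: "orb \<sigma> ?x = C" using orb_eq[OF \<sigma> finite_lessThan xo] orb_rep[OF \<sigma> C] by simp
  have ex: "\<exists>k. (\<sigma> ^^ k) (rep C) = ?x" by blast
  define k where "k = (SOME k. (\<sigma> ^^ k) (rep C) = ?x)"
  have k: "(\<sigma> ^^ k) (rep C) = ?x" unfolding k_def by (rule someI_ex[OF ex])
  have "tau N \<sigma> n y ?x = (\<sigma> ^^ ((N - 1) * k)) (y C)"
    unfolding tau_def using xn ox k_def by simp
  also have "\<dots> = (\<sigma> ^^ ((N - 1) * e)) (y C)" by (rule WD[OF C y[OF C] k])
  finally show ?thesis .
qed

lemma tau_rep: "C \<in> orbs n \<sigma> \<Longrightarrow> tau N \<sigma> n y (rep C) = y C"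
  using tau_pow[of C 0] by simp

lemma tau_props: "tau N \<sigma> n y (tau N \<sigma> n y x) = x \<and> \<sigma> (tau N \<sigma> n y (\<sigma> (tau N \<sigma> n y x))) = x"
proof (cases "x < n")
  case False
  thus ?thesis using permutes_not_in[OF \<sigma>, of x] by (simp add: tau_def)
next
  case True
  let ?t = "tau N \<sigma> n y"
  define D where "D = orb \<sigma> x"
  have C: "D \<in> orbs n \<sigma>" using True unfolding orbs_def D_def by auto
  define r where "r = rep D"
  have tp: "?t ((\<sigma> ^^ a) r) = (\<sigma> ^^ ((N - 1) * a)) (y D)" for a
    unfolding r_def by (rule tau_pow[OF C])
  obtain e where e: "x = (\<sigma> ^^ e) r" using in_orb_rep[OF \<sigma> True] unfolding orb_def r_def D_def by auto
  have "y D \<in> orb \<sigma> r" using y[OF C] orb_rep[OF \<sigma> C] unfolding r_def by simp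
  then obtain j where j: "y D = (\<sigma> ^^ j) r" unfolding orb_def by auto
  have tx: "?t x = (\<sigma> ^^ ((N - 1) * e + j)) r"
    using tp[of e] e j pow_pow by simp
  have "?t (?t x) = (\<sigma> ^^ ((N - 1) * ((N - 1) * e + j) + j)) r"
    using tp[of "(N - 1) * e + j"] tx j pow_pow by simp
  also have "\<dots> = (\<sigma> ^^ e) r" by (rule pow_cong) (rule mod_arith[OF N(2)])
  finally have 1: "?t (?t x) = x" using e by simp
  have "\<sigma> (?t x) = (\<sigma> ^^ ((N - 1) * e + Suc j)) r" unfolding tx by simp
  hence "?t (\<sigma> (?t x)) = (\<sigma> ^^ ((N - 1) * ((N - 1) * e + Suc j) + j)) r"
    using tp[of "(N - 1) * e + Suc j"] j pow_pow by simp
  hence "\<sigma> (?t (\<sigma> (?t x))) = (\<sigma> ^^ ((N - 1) * ((N - 1) * e + Suc j) + Suc j)) r" by simp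
  also have "\<dots> = (\<sigma> ^^ e) r" by (rule pow_cong) (rule mod_arith[OF N(2)])
  finally have 2: "\<sigma> (?t (\<sigma> (?t x))) = x" using e by simp
  from 1 2 show ?thesis ..
qed

lemma tau_T: "tau N \<sigma> n y \<in> Tset n \<sigma>"
proof -
  let ?t = "tau N \<sigma> n y"
  have inv: "?t (?t x) = x" for x using tau_props by blast
  have p: "?t permutes {..<n}"
    unfolding permutes_def
  proof (intro conjI allI impI)
    fix x assume "x \<notin> {..<n}" thus "?t x = x" by (simp add: tau_def)
  next
    fix z show "\<exists>!x. ?t x = z"
    proof
      show "?t (?t z) = z" by (rule inv)
      fix x assume "?t x = z" thus "x = ?t z" using inv[of x] by simp
    qed
  qed
  have "?t \<circ> ?t = id" using inv by (simp add: fun_eq_iff)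
  moreover have "(\<sigma> \<circ> ?t) \<circ> (\<sigma> \<circ> ?t) = id" using tau_props by (simp add: fun_eq_iff)
  ultimately show ?thesis using p by (simp add: Tset_def Sym_def)
qed

end

lemma invol_lower: "Pf (orbs n \<sigma>) \<le> real (card (Tset n \<sigma>))"
proof -
  have "card (PiE (orbs n \<sigma>) (\<lambda>C. C)) \<le> card (Tset n \<sigma>)"
  proof (rule card_inj_on_le[where f = "tau N \<sigma> n"])
    show "inj_on (tau N \<sigma> n) (PiE (orbs n \<sigma>) (\<lambda>C. C))"
    proof (rule inj_onI)
      fix y1 y2 assume y1: "y1 \<in> PiE (orbs n \<sigma>) (\<lambda>C. C)" and y2: "y2 \<in> PiE (orbs n \<sigma>) (\<lambda>C. C)"
        and eq: "tau N \<sigma> n y1 = tau N \<sigma> n y2"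
      show "y1 = y2"
      proof (rule PiE_ext[OF y1 y2])
        fix C assume C: "C \<in> orbs n \<sigma>"
        have h1: "\<And>C. C \<in> orbs n \<sigma> \<Longrightarrow> y1 C \<in> C" using y1 by auto
        have h2: "\<And>C. C \<in> orbs n \<sigma> \<Longrightarrow> y2 C \<in> C" using y2 by auto
        show "y1 C = y2 C" using tau_rep[OF h1 C] tau_rep[OF h2 C] eq by simp
      qed
    qed
    show "tau N \<sigma> n ` PiE (orbs n \<sigma>) (\<lambda>C. C) \<subseteq> Tset n \<sigma>"
    proof
      fix t assume "t \<in> tau N \<sigma> n ` PiE (orbs n \<sigma>) (\<lambda>C. C)"
      then obtain y0 where y0: "y0 \<in> PiE (orbs n \<sigma>) (\<lambda>C. C)" "t = tau N \<sigma> n y0" by blast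
      have h: "\<And>C. C \<in> orbs n \<sigma> \<Longrightarrow> y0 C \<in> C" using y0(1) by auto
      show "t \<in> Tset n \<sigma>" using tau_T[OF h] y0(2) by simp
    qed
  qed (rule finite_Tset)
  hence "real (card (PiE (orbs n \<sigma>) (\<lambda>C. C))) \<le> real (card (Tset n \<sigma>))" by (simp only: of_nat_le_iff)
  thus ?thesis using card_PiE_orbs[OF \<sigma>] by simp
qed

end

lemma invol_bounds:
  assumes "\<sigma> \<in> Sym n"
  shows "Pf (orbs n \<sigma>) \<le> real (invol n \<sigma>)"
        "real (invol n \<sigma>) \<le> Pf (orbs n \<sigma>) + real (Kcyc n \<sigma>) ^ Kcyc n \<sigma> * Qf (orbs n \<sigma>)"
proof -
  have \<sigma>: "\<sigma> permutes {..<n}" using assms by (simp add: Sym_def)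
  obtain N where N: "\<sigma> ^^ N = id" "N > 0" using perm_nilp[OF \<sigma>] by blast
  show "Pf (orbs n \<sigma>) \<le> real (invol n \<sigma>)"
    using invol_lower[OF \<sigma> N] invol_Tset[OF assms] by simp
  show "real (invol n \<sigma>) \<le> Pf (orbs n \<sigma>) + real (Kcyc n \<sigma>) ^ Kcyc n \<sigma> * Qf (orbs n \<sigma>)"
    using invol_upper[OF \<sigma>] invol_Tset[OF assms] by (simp add: Kcyc_orbs)
qed


definition "As n m = (\<Sum>\<sigma>\<in>{\<sigma>\<in>Sym n. Kcyc n \<sigma> = m}. real (invol n \<sigma>))"

lemma Bn_card: "Bn n m = real (card {\<sigma>\<in>Sym n. Kcyc n \<sigma> = m})"
  by (simp add: Bn_def Sm_def)

lemma cond_exp_eq: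
  assumes "\<theta> > 0"
  shows "cond_exp_invol \<theta> n m = As n m / Bn n m"
proof -
  let ?S = "{\<sigma>\<in>Sym n. Kcyc n \<sigma> = m}"
  let ?c = "\<theta> ^ m / pochhammer \<theta> n"
  have c: "?c \<noteq> 0" using assms pochhammer_pos[OF assms, of n] by simp
  have "(\<Sum>\<sigma>\<in>?S. ewens \<theta> n \<sigma> * real (invol n \<sigma>)) = (\<Sum>\<sigma>\<in>?S. ?c * real (invol n \<sigma>))"
    by (rule sum.cong) (auto simp: ewens_def)
  moreover have "(\<Sum>\<sigma>\<in>?S. ewens \<theta> n \<sigma>) = (\<Sum>\<sigma>\<in>?S. ?c)"
    by (rule sum.cong) (auto simp: ewens_def)
  ultimately have "cond_exp_invol \<theta> n m = (?c * As n m) / (?c * Bn n m)"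
    unfolding cond_exp_invol_def As_def Bn_card by (simp add: sum_distrib_left)
  thus ?thesis using c assms by simp
qed

lemma A_bounds:
  "Dn n m \<le> As n m" "As n m \<le> Dn n m + real m ^ m * Vn n m"
proof -
  let ?S = "{\<sigma>\<in>Sym n. Kcyc n \<sigma> = m}"
  show "Dn n m \<le> As n m" unfolding Dn_def Sm_def As_def
    by (rule sum_mono) (use invol_bounds(1) in auto)
  have "As n m \<le> (\<Sum>\<sigma>\<in>?S. Pf (orbs n \<sigma>) + real m ^ m * Qf (orbs n \<sigma>))"
    unfolding As_def
  proof (rule sum_mono)
    fix \<sigma> assume "\<sigma> \<in> ?S"
    thus "real (invol n \<sigma>) \<le> Pf (orbs n \<sigma>) + real m ^ m * Qf (orbs n \<sigma>)"
      using invol_bounds(2)[of \<sigma> n] by auto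
  qed
  thus "As n m \<le> Dn n m + real m ^ m * Vn n m"
    by (simp add: Dn_def Vn_def Sm_def sum.distrib sum_distrib_left)
qed

lemma Bn_0: "Bn 0 m = (if m = 0 then 1 else 0)" by (simp add: Bn_def Sm_0)
lemma Dn_0: "Dn 0 m = (if m = 0 then 1 else 0)" by (simp add: Dn_def Sm_0)
lemma Vn_0: "Vn 0 m = 0" by (simp add: Vn_def Sm_0)
lemma Bn_Suc_0: "Bn (Suc n) 0 = 0" by (simp add: Bn_def Sm_Suc_0)
lemma Dn_Suc_0: "Dn (Suc n) 0 = 0" by (simp add: Dn_def Sm_Suc_0)
lemma Vn_Suc_0: "Vn (Suc n) 0 = 0" by (simp add: Vn_def Sm_Suc_0)

lemma choose_absorb: "Suc k * (a choose Suc k) = (a - k) * (a choose k)"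
  using binomial_absorption[of k a] binomial_absorb_comp[of a k] by simp

lemma D_closed: "n \<ge> 1 \<Longrightarrow> m \<ge> 1 \<Longrightarrow> fact m * Dn n m = fact n * real ((n - 1) choose (m - 1))"
proof (induction n arbitrary: m rule: nat_induct_at_least)
  case base
  then obtain k where m: "m = Suc k" by (cases m) auto
  show ?case unfolding m One_nat_def D_rec by (cases k) (simp_all add: Dn_0)
next
  case (Suc n)
  then obtain k where m: "m = Suc k" by (cases m) auto
  show ?case
  proof (cases k)
    case 0
    have "fact 1 * Dn (Suc n) 1 = real (Suc n) * (fact 1 * Dn n 1)"
      using D_rec[of n 0] Suc.hyps by (cases n) (simp_all add: Dn_Suc_0)
    also have "\<dots> = fact (Suc n)" using Suc.IH[of 1] by simp
    finally show ?thesis using m 0 by simp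
  next
    case (Suc k')
    have IH1: "fact k * Dn n k = fact n * real ((n - 1) choose (k - 1))" using Suc.IH[of k] Suc by simp
    have IH2: "fact (Suc k) * Dn n (Suc k) = fact n * real ((n - 1) choose k)" using Suc.IH[of "Suc k"] by simp
    have "fact (Suc k) * Dn (Suc n) (Suc k) = real (Suc k) * (fact k * Dn n k) + real (n + Suc k) * (fact (Suc k) * Dn n (Suc k))"
      by (simp add: D_rec algebra_simps)
    also have "\<dots> = fact n * (real (Suc k) * real ((n - 1) choose (k - 1)) + real (n + Suc k) * real ((n - 1) choose k))"
      unfolding IH1 IH2 by (simp add: algebra_simps)
    also have "real (Suc k) * real ((n - 1) choose (k - 1)) + real (n + Suc k) * real ((n - 1) choose k)
             = real (Suc n) * real (n choose k)"
    proof -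
      have a: "k * ((n - 1) choose k) = (n - k) * ((n - 1) choose (k - 1))"
        using choose_absorb[of "k - 1" "n - 1"] Suc `n \<ge> 1` by (simp add: Suc)
      have b: "n choose k = ((n - 1) choose k) + ((n - 1) choose (k - 1))"
        using `n \<ge> 1` Suc by (cases n) simp_all
      have "k \<le> n \<or> k > n" by auto
      thus ?thesis
      proof
        assume kn: "k \<le> n"
        have a': "real k * real ((n - 1) choose k) = (real n - real k) * real ((n - 1) choose (k - 1))"
          using a kn by (metis of_nat_diff of_nat_mult)
        show ?thesis unfolding b using a' by (simp add: algebra_simps)
      next
        assume kn: "k > n"
        hence z: "(n - 1) choose k = 0" "(n - 1) choose (k - 1) = 0" "n choose k = 0" using Suc `n \<ge> 1` by auto
        show ?thesis unfolding z by simp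
      qed
    qed
    finally show ?thesis using m by (simp add: algebra_simps)
  qed
qed


lemma S1:
  fixes a b :: real
  assumes "0 \<le> b" "b \<le> a"
  shows "a ^ k - b ^ k \<le> real k * (a - b) * a ^ (k - 1)"
proof (induction k)
  case 0 thus ?case by simp
next
  case (Suc k)
  have a0: "a \<ge> 0" using assms by linarith
  have "a ^ Suc k - b ^ Suc k = a * (a ^ k - b ^ k) + (a - b) * b ^ k" by (simp add: algebra_simps)
  also have "\<dots> \<le> a * (real k * (a - b) * a ^ (k - 1)) + (a - b) * a ^ k"
    using Suc.IH a0 assms by (intro add_mono mult_left_mono mult_right_mono power_mono) auto
  also have "a * (real k * (a - b) * a ^ (k - 1)) = real k * (a - b) * a ^ k"
    by (cases k) (simp_all add: algebra_simps)
  finally show ?case by (simp add: algebra_simps)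
qed

lemma S2:
  fixes b x :: real
  assumes "0 \<le> b" "0 \<le> x"
  shows "b ^ k + real k * x * b ^ (k - 1) \<le> (b + x) ^ k"
proof (induction k)
  case 0 thus ?case by simp
next
  case (Suc k)
  have "b ^ Suc k + real (Suc k) * x * b ^ k \<le> (b + x) * (b ^ k + real k * x * b ^ (k - 1))"
  proof (cases k)
    case 0 thus ?thesis by (simp add: algebra_simps)
  next
    case (Suc k')
    have "0 \<le> real k * x * x * b ^ k'" using assms by simp
    thus ?thesis using Suc by (simp add: algebra_simps)
  qed
  also have "\<dots> \<le> (b + x) * (b + x) ^ k"
    using Suc.IH assms by (intro mult_left_mono) auto
  finally show ?case by simp
qed

lemma S3:
  fixes h x :: real
  assumes "0 \<le> h" "0 \<le> x"
  shows "(h + x) ^ k - h ^ k - real k * x * h ^ (k - 1) \<le> real k * real (k - 1) * x\<^sup>2 * (h + x) ^ (k - 2)"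
proof -
  have "(h + x) ^ k - h ^ k \<le> real k * x * (h + x) ^ (k - 1)"
    using S1[of h "h + x" k] assms by simp
  moreover have "(h + x) ^ (k - 1) - h ^ (k - 1) \<le> real (k - 1) * x * (h + x) ^ (k - 1 - 1)"
    using S1[of h "h + x" "k - 1"] assms by simp
  hence "real k * x * ((h + x) ^ (k - 1) - h ^ (k - 1)) \<le> real k * x * (real (k - 1) * x * (h + x) ^ (k - 2))"
    using assms by (intro mult_left_mono) (auto simp: diff_diff_left numeral_2_eq_2)
  ultimately show ?thesis by (simp add: algebra_simps power2_eq_square)
qed

lemma step_upper:
  fixes h x :: real
  assumes "0 \<le> h" "0 \<le> x" "k \<ge> 1"
  shows "h ^ k / fact k + x * (h ^ (k - 1) / fact (k - 1)) \<le> (h + x) ^ k / fact k"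
proof -
  have fk: "fact k = real k * fact (k - 1)" using assms(3) by (cases k) auto
  have "h ^ k / fact k + x * (h ^ (k - 1) / fact (k - 1)) = (h ^ k + real k * x * h ^ (k - 1)) / fact k"
    using assms(3) by (simp add: fk field_simps)
  also have "\<dots> \<le> (h + x) ^ k / fact k"
    using S2[OF assms(1,2), of k] by (intro divide_right_mono) auto
  finally show ?thesis .
qed

lemma step_lower:
  fixes h x :: real
  assumes h: "0 \<le> h" and x: "0 \<le> x" "x \<le> 1" and k: "k \<ge> 1"
  shows "(h + x) ^ k / fact k - 2 * real k ^ 2 * (1 + h + x) ^ (k - 1) \<le>
         (h ^ k / fact k - 2 * real k ^ 2 * (1 + h) ^ (k - 1)) +
         x * (h ^ (k - 1) / fact (k - 1) - 2 * real (k - 1) ^ 2 * (1 + h) ^ (k - 2))"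
proof (cases "k = 1")
  case True thus ?thesis by simp
next
  case False
  hence k2: "k \<ge> 2" using k by simp
  have fk: "fact k = real k * fact (k - 1)" using k by (cases k) auto
  have fk1: "fact k \<ge> (1::real)" by simp
  let ?P = "(1 + h) ^ (k - 2)"
  have P0: "?P \<ge> 0" using h by simp
  have A: "((h + x) ^ k - h ^ k - real k * x * h ^ (k - 1)) / fact k \<le> real k * real (k - 1) * x * ?P"
  proof -
    have "((h + x) ^ k - h ^ k - real k * x * h ^ (k - 1)) / fact k \<le> (h + x) ^ k - h ^ k - real k * x * h ^ (k - 1)"
    proof -
      have "(h + x) ^ k - h ^ k - real k * x * h ^ (k - 1) \<ge> 0" using S2[OF h x(1), of k] by simp
      thus ?thesis using fk1 by (simp add: divide_le_eq mult_le_cancel_left1 mult_le_cancel_right1)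
    qed
    also have "\<dots> \<le> real k * real (k - 1) * x\<^sup>2 * (h + x) ^ (k - 2)" by (rule S3[OF h x(1)])
    also have "\<dots> \<le> real k * real (k - 1) * x * ?P"
    proof -
      have "x\<^sup>2 \<le> x" using x by (simp add: power2_eq_square mult_left_le)
      moreover have "(h + x) ^ (k - 2) \<le> ?P" using h x by (intro power_mono) auto
      ultimately have "x\<^sup>2 * (h + x) ^ (k - 2) \<le> x * ?P" using x h by (intro mult_mono) auto
      thus ?thesis by (simp add: mult.assoc mult_left_mono)
    qed
    finally show ?thesis .
  qed
  have B: "(1 + h) ^ (k - 1) + real (k - 1) * x * ?P \<le> (1 + h + x) ^ (k - 1)"
    using S2[of "1 + h" x "k - 1"] h x by (simp add: diff_diff_left numeral_2_eq_2)
  have C: "real k * real (k - 1) + 2 * real (k - 1) ^ 2 \<le> 2 * real k ^ 2 * real (k - 1)"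
  proof -
    define K where "K = real k"
    have K1: "K - 1 \<ge> 0" using k unfolding K_def by simp
    have q: "2 * K ^ 2 - 3 * K + 2 \<ge> 0"
    proof -
      have "2 * K ^ 2 - 3 * K + 2 = 2 * (K - 3/4)^2 + 7/8" by (simp add: power2_eq_square algebra_simps)
      thus ?thesis using zero_le_power2[of "K - 3/4"] by linarith
    qed
    have "(K - 1) * (2 * K ^ 2 - 3 * K + 2) \<ge> 0" using K1 q by simp
    moreover have e: "real (k - 1) = K - 1" using k unfolding K_def by simp
    moreover have "2 * K ^ 2 * (K - 1) - (K * (K - 1) + 2 * (K - 1) ^ 2) = (K - 1) * (2 * K ^ 2 - 3 * K + 2)"
      by (simp add: algebra_simps power2_eq_square)
    ultimately have "K * (K - 1) + 2 * (K - 1) ^ 2 \<le> 2 * K ^ 2 * (K - 1)" by linarith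
    thus ?thesis unfolding e K_def .
  qed
  have hk: "h ^ (k - 1) / fact (k - 1) = real k * h ^ (k - 1) / fact k" using fk k by simp
  have "(h + x) ^ k / fact k - 2 * real k ^ 2 * (1 + h + x) ^ (k - 1) \<le>
        (h + x) ^ k / fact k - 2 * real k ^ 2 * ((1 + h) ^ (k - 1) + real (k - 1) * x * ?P)"
    using B by (intro diff_left_mono mult_left_mono) auto
  also have "\<dots> = h ^ k / fact k - 2 * real k ^ 2 * (1 + h) ^ (k - 1) + x * (real k * h ^ (k - 1) / fact k)
         + ((h + x) ^ k - h ^ k - real k * x * h ^ (k - 1)) / fact k - 2 * real k ^ 2 * real (k - 1) * x * ?P"
    by (simp add: field_simps)
  also have "\<dots> \<le> h ^ k / fact k - 2 * real k ^ 2 * (1 + h) ^ (k - 1) + x * (real k * h ^ (k - 1) / fact k)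
         + real k * real (k - 1) * x * ?P - 2 * real k ^ 2 * real (k - 1) * x * ?P"
    using A by linarith
  also have "\<dots> \<le> h ^ k / fact k - 2 * real k ^ 2 * (1 + h) ^ (k - 1) + x * (real k * h ^ (k - 1) / fact k)
         - x * (2 * real (k - 1) ^ 2 * ?P)"
  proof -
    have "(real k * real (k - 1) + 2 * real (k - 1) ^ 2) * (x * ?P) \<le> (2 * real k ^ 2 * real (k - 1)) * (x * ?P)"
      using C x P0 by (intro mult_right_mono) auto
    thus ?thesis by (simp add: algebra_simps)
  qed
  also have "\<dots> = (h ^ k / fact k - 2 * real k ^ 2 * (1 + h) ^ (k - 1)) +
         x * (h ^ (k - 1) / fact (k - 1) - 2 * real (k - 1) ^ 2 * (1 + h) ^ (k - 2))"
    unfolding hk by (simp add: algebra_simps)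
  finally show ?thesis .
qed


definition "Ef n k = Bn n (Suc k) / fact (n - 1)"

lemma Bn_0_pos: "n \<ge> 1 \<Longrightarrow> Bn n 0 = 0" by (cases n) (simp_all add: Bn_Suc_0)
lemma Dn_0_pos: "n \<ge> 1 \<Longrightarrow> Dn n 0 = 0" by (cases n) (simp_all add: Dn_Suc_0)
lemma Vn_0_pos: "n \<ge> 1 \<Longrightarrow> Vn n 0 = 0" by (cases n) (simp_all add: Vn_Suc_0)

lemma fact_pred: "n \<ge> 1 \<Longrightarrow> (fact n :: real) = real n * fact (n - 1)"
  by (cases n) auto

lemma E_rec: "n \<ge> 1 \<Longrightarrow> k \<ge> 1 \<Longrightarrow> Ef (Suc n) k = Ef n k + (1 / real n) * Ef n (k - 1)"
proof -
  assume n: "n \<ge> 1" and k: "k \<ge> 1"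
  have "Ef (Suc n) k = (Bn n k + real n * Bn n (Suc k)) / fact n" by (simp add: Ef_def B_rec)
  also have "\<dots> = Ef n k + (1 / real n) * Ef n (k - 1)"
    using n k by (simp add: Ef_def fact_pred[OF n] field_simps)
  finally show ?thesis .
qed

lemma E_rec0: "n \<ge> 1 \<Longrightarrow> Ef (Suc n) 0 = Ef n 0"
proof -
  assume n: "n \<ge> 1"
  have "Ef (Suc n) 0 = (Bn n 0 + real n * Bn n (Suc 0)) / fact n" by (simp add: Ef_def B_rec)
  also have "\<dots> = Ef n 0" using n by (simp add: Ef_def fact_pred[OF n] Bn_0_pos)
  finally show ?thesis .
qed

lemma E_bounds:
  assumes "n \<ge> 1"
  shows "Ef n k \<le> harm (n - 1) ^ k / fact k \<and>
         harm (n - 1) ^ k / fact k - 2 * real k ^ 2 * (1 + harm (n - 1)) ^ (k - 1) \<le> Ef n k"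
  using assms
proof (induction n arbitrary: k rule: nat_induct_at_least)
  case base
  have "Ef 1 k = (if k = 0 then 1 else 0)"
    using B_rec[of 0 k] by (simp add: Ef_def Bn_0)
  thus ?case by (cases k) (simp_all add: harm_def)
next
  case (Suc n)
  let ?h = "harm (n - 1) :: real" and ?x = "1 / real n"
  have hh: "harm (Suc n - 1) = ?h + ?x" using Suc.hyps by (cases n) (simp_all add: harm_Suc field_simps)
  have h0: "?h \<ge> 0" by (rule harm_nonneg)
  have x0: "?x \<ge> 0" "?x \<le> 1" using Suc.hyps by auto
  show ?case
  proof (cases "k = 0")
    case True thus ?thesis using Suc.IH[of 0] E_rec0[OF Suc.hyps] by simp
  next
    case False
    hence k: "k \<ge> 1" by simp
    have rec: "Ef (Suc n) k = Ef n k + ?x * Ef n (k - 1)" using E_rec[OF Suc.hyps k] .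
    have I1: "Ef n k \<le> ?h ^ k / fact k" "?h ^ k / fact k - 2 * real k ^ 2 * (1 + ?h) ^ (k - 1) \<le> Ef n k"
      using Suc.IH[of k] by auto
    have I2: "Ef n (k - 1) \<le> ?h ^ (k - 1) / fact (k - 1)"
      "?h ^ (k - 1) / fact (k - 1) - 2 * real (k - 1) ^ 2 * (1 + ?h) ^ (k - 2) \<le> Ef n (k - 1)"
      using Suc.IH[of "k - 1"] by (auto simp: diff_diff_left numeral_2_eq_2)
    have "Ef (Suc n) k \<le> ?h ^ k / fact k + ?x * (?h ^ (k - 1) / fact (k - 1))"
      unfolding rec using I1(1) I2(1) x0 by (intro add_mono mult_left_mono) auto
    also have "\<dots> \<le> (?h + ?x) ^ k / fact k" by (rule step_upper[OF h0 x0(1) k])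
    finally have U: "Ef (Suc n) k \<le> harm (Suc n - 1) ^ k / fact k" unfolding hh .
    have "(?h + ?x) ^ k / fact k - 2 * real k ^ 2 * (1 + ?h + ?x) ^ (k - 1) \<le>
         (?h ^ k / fact k - 2 * real k ^ 2 * (1 + ?h) ^ (k - 1)) +
         ?x * (?h ^ (k - 1) / fact (k - 1) - 2 * real (k - 1) ^ 2 * (1 + ?h) ^ (k - 2))"
      by (rule step_lower[OF h0 x0 k])
    also have "\<dots> \<le> Ef (Suc n) k"
      unfolding rec using I1(2) I2(2) x0 by (intro add_mono mult_left_mono) auto
    finally have L: "harm (Suc n - 1) ^ k / fact k - 2 * real k ^ 2 * (1 + harm (Suc n - 1)) ^ (k - 1) \<le> Ef (Suc n) k"
      unfolding hh by (simp add: add.assoc)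
    from U L show ?thesis by blast
  qed
qed

lemma V1: "n \<ge> 1 \<Longrightarrow> real n * Vn n 1 = fact n"
proof (induction n rule: nat_induct_at_least)
  case base thus ?case using V_rec[of 0 0] by (simp add: Vn_0 Dn_0)
next
  case (Suc n)
  have "Vn (Suc n) 1 = real n * Vn n 1"
    using V_rec[of n 0] Suc.hyps by (simp add: Vn_0_pos Dn_0_pos)
  thus ?case using Suc.IH by simp
qed

lemma Vn_nonneg: "Vn n m \<ge> 0" by (simp add: Vn_def Sm_def sum_nonneg Qf_nonneg)
lemma Dn_nonneg: "Dn n m \<ge> 0" by (simp add: Dn_def Sm_def sum_nonneg Pf_nonneg)
lemma Bn_nonneg: "Bn n m \<ge> 0" by (simp add: Bn_card)

lemma choose_le_pow: "a choose k \<le> a ^ k"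
proof (induction k)
  case 0 thus ?case by simp
next
  case (Suc k)
  have "Suc k * (a choose Suc k) = (a - k) * (a choose k)" by (rule choose_absorb)
  also have "\<dots> \<le> a * a ^ k" using Suc.IH by (intro mult_le_mono) auto
  finally have "Suc k * (a choose Suc k) \<le> a ^ Suc k" by simp
  moreover have "a choose Suc k \<le> Suc k * (a choose Suc k)" by simp
  ultimately show ?case by (rule le_trans[rotated])
qed

lemma choose_ge: "k \<le> a + 1 \<Longrightarrow> (a + 1 - k) ^ k \<le> fact k * (a choose k)"
proof (induction k)
  case 0 thus ?case by simp
next
  case (Suc k)
  have "(a + 1 - Suc k) ^ Suc k = (a - k) * (a - k) ^ k" by simp
  also have "\<dots> \<le> (a - k) * (a + 1 - k) ^ k" by (intro mult_le_mono power_mono) auto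
  also have "\<dots> \<le> (a - k) * (fact k * (a choose k))" using Suc by (intro mult_le_mono) auto
  also have "\<dots> = fact k * ((a - k) * (a choose k))" by (simp only: mult.left_commute)
  also have "\<dots> = fact k * (Suc k * (a choose Suc k))" by (simp only: choose_absorb)
  also have "\<dots> = fact (Suc k) * (a choose Suc k)" by (simp add: algebra_simps)
  finally show ?case .
qed

lemma D_upper: "n \<ge> 1 \<Longrightarrow> m \<ge> 1 \<Longrightarrow> Dn n m \<le> fact n * real n ^ (m - 1)"
proof -
  assume n: "n \<ge> 1" and m: "m \<ge> 1"
  have "Dn n m = fact n * real ((n - 1) choose (m - 1)) / fact m"
    using D_closed[OF n m] by (simp add: field_simps)
  also have "\<dots> \<le> fact n * real ((n - 1) choose (m - 1)) / 1"
    by (rule divide_left_mono) auto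
  also have "\<dots> = fact n * real ((n - 1) choose (m - 1))" by simp
  also have "\<dots> \<le> fact n * real n ^ (m - 1)"
  proof -
    have "(n - 1) choose (m - 1) \<le> n ^ (m - 1)"
      using choose_le_pow[of "n - 1" "m - 1"] power_mono[of "n - 1" n "m - 1"] by simp
    hence "real ((n - 1) choose (m - 1)) \<le> real n ^ (m - 1)" by (metis of_nat_le_iff of_nat_power)
    thus ?thesis by (intro mult_left_mono) auto
  qed
  finally show ?thesis .
qed

lemma harm_le_n: "harm n \<le> (real n :: real)"
proof (induction n)
  case 0 thus ?case by (simp add: harm_def)
next
  case (Suc n)
  have "inverse (real (Suc n)) \<le> (1::real)" by (simp add: inverse_le_1_iff)
  thus ?case using Suc by (simp add: harm_Suc)
qed

lemma pow_ineq: "(a::real) \<ge> 0 \<Longrightarrow> (a + real j) * a ^ j \<le> a * (a + 1) ^ j"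
proof (induction j)
  case 0 thus ?case by simp
next
  case (Suc j)
  have "(a + real (Suc j)) * a ^ Suc j = a ^ j * (a * (a + real j + 1))" by (simp add: algebra_simps)
  also have "\<dots> \<le> a ^ j * ((a + 1) * (a + real j))"
    using Suc.prems by (intro mult_left_mono) (auto simp: algebra_simps)
  also have "\<dots> = (a + 1) * ((a + real j) * a ^ j)" by (simp add: algebra_simps)
  also have "\<dots> \<le> (a + 1) * (a * (a + 1) ^ j)" using Suc by (intro mult_left_mono) auto
  also have "\<dots> = a * (a + 1) ^ Suc j" by (simp add: algebra_simps)
  finally show ?case .
qed

lemma V_step:
  assumes m: "m \<ge> 2"
      and Fb: "\<And>n. Vn n (m - 1) + Dn n (m - 1) \<le> real m * fact n * real (n + 1) ^ (m - 2)"
  shows "Vn n m \<le> real m * fact n * real (n + 1) ^ (m - 2) * (1 + harm n)"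
proof (induction n)
  case 0
  have "(0::real) \<le> 1 + harm 0" by (simp add: harm_def)
  thus ?case by (simp add: Vn_0)
next
  case (Suc n)
  obtain m' where m': "m = Suc m'" using m by (cases m) auto
  let ?P = "real m * fact n" and ?Y = "real (n + 1) ^ (m - 2)" and ?Z = "real (n + 2) ^ (m - 2)"
  let ?H = "harm n :: real"
  have H0: "?H \<ge> 0" by (rule harm_nonneg)
  have P0: "?P \<ge> 0" by simp
  have YZ: "?Y \<le> ?Z" by (intro power_mono) auto
  have pw: "real (n + m') * ?Y \<le> real (n + 1) * ?Z"
  proof -
    have A: "(real (n + 1) + real (m - 2)) * real (n + 1) ^ (m - 2) \<le> real (n + 1) * (real (n + 1) + 1) ^ (m - 2)"
      by (rule pow_ineq) simp
    have e1: "real (n + 1) + real (m - 2) = real (n + m')" using m m' by simp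
    have e2: "real (n + 1) + 1 = real (n + 2)" by simp
    show ?thesis using A unfolding e1 e2 .
  qed
  have "Vn (Suc n) m = (Vn n m' + Dn n m') + real (n + m') * Vn n m"
    unfolding m' V_rec by simp
  also have "\<dots> \<le> ?P * ?Y + real (n + m') * (?P * ?Y * (1 + ?H))"
    using Fb[of n] Suc.IH m' by (intro add_mono mult_left_mono) (auto simp: mult.assoc)
  also have "\<dots> = ?P * ?Y + ?P * (real (n + m') * ?Y) * (1 + ?H)" by (simp add: algebra_simps)
  also have "\<dots> \<le> ?P * ?Z + ?P * (real (n + 1) * ?Z) * (1 + ?H)"
    using YZ pw P0 H0 by (intro add_mono mult_left_mono mult_right_mono) auto
  also have "\<dots> = real m * fact (Suc n) * ?Z * (1 + harm (Suc n))"
    by (simp add: harm_Suc field_simps)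
  finally show ?case by (simp add: add.commute)
qed

lemma V_bound: "m \<ge> 2 \<Longrightarrow> Vn n m \<le> real m * fact n * real (n + 1) ^ (m - 2) * (1 + harm n)"
proof (induction m arbitrary: n rule: nat_induct_at_least)
  case base
  show ?case
  proof (rule V_step)
    fix n :: nat
    show "Vn n (2 - 1) + Dn n (2 - 1) \<le> real 2 * fact n * real (n + 1) ^ (2 - 2)"
    proof (cases "n = 0")
      case True thus ?thesis by (simp add: Vn_0 Dn_0)
    next
      case False
      hence n: "n \<ge> 1" by simp
      have "Vn n 1 \<le> fact n"
      proof -
        have "real n * Vn n 1 = fact n" by (rule V1[OF n])
        moreover have "Vn n 1 \<le> real n * Vn n 1" using n Vn_nonneg[of n 1]
          by (simp add: mult_le_cancel_right1)
        ultimately show ?thesis by simp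
      qed
      moreover have "Dn n 1 \<le> fact n" using D_upper[OF n, of 1] by simp
      ultimately show ?thesis by simp
    qed
  qed simp
next
  case (Suc m)
  show ?case
  proof (rule V_step)
    fix n :: nat
    show "Vn n (Suc m - 1) + Dn n (Suc m - 1) \<le> real (Suc m) * fact n * real (n + 1) ^ (Suc m - 2)"
    proof (cases "n = 0")
      case True thus ?thesis using Suc.hyps by (simp add: Vn_0 Dn_0)
    next
      case False
      hence n: "n \<ge> 1" by simp
      have "Vn n m \<le> real m * fact n * real (n + 1) ^ (m - 2) * (1 + harm n)" by (rule Suc.IH)
      also have "\<dots> \<le> real m * fact n * real (n + 1) ^ (m - 2) * real (n + 1)"
        using harm_le_n[of n] by (intro mult_left_mono) auto
      also have "\<dots> = real m * fact n * real (n + 1) ^ (m - 1)"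
      proof -
        obtain j where j: "m = Suc (Suc j)" using Suc.hyps by (metis add_2_eq_Suc le_Suc_ex)
        show ?thesis unfolding j by (simp add: power_Suc2)
      qed
      finally have a: "Vn n m \<le> real m * fact n * real (n + 1) ^ (m - 1)" .
      have "Dn n m \<le> fact n * real n ^ (m - 1)" using D_upper[OF n] Suc.hyps by simp
      also have "\<dots> \<le> fact n * real (n + 1) ^ (m - 1)" by (intro mult_left_mono power_mono) auto
      finally have b: "Dn n m \<le> fact n * real (n + 1) ^ (m - 1)" .
      have e: "Suc m - 2 = m - 1" by simp
      show ?thesis using a b unfolding e by (simp add: algebra_simps)
    qed
  qed (use Suc.hyps in simp)
qed


lemma fact_choose_le: "fact k * (a choose k) \<le> a ^ k"
proof (induction k)
  case 0 thus ?case by simp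
next
  case (Suc k)
  have "fact (Suc k) * (a choose Suc k) = fact k * (Suc k * (a choose Suc k))" by (simp add: algebra_simps)
  also have "\<dots> = fact k * ((a - k) * (a choose k))" by (simp only: choose_absorb)
  also have "\<dots> = (a - k) * (fact k * (a choose k))" by (simp only: mult.left_commute)
  also have "\<dots> \<le> a * a ^ k" using Suc.IH by (intro mult_le_mono) auto
  finally show ?case by simp
qed

lemma ln_facts:
  assumes n: "n \<ge> 2"
  shows "ln (real n) \<le> harm (n - 1)" "harm (n - 1) \<le> 1 + ln (real n)"
        "harm n \<le> 1 + ln (real n)" "ln (real n) ^ 2 \<le> 4 * real n" "ln (real n) \<le> real n"
        "ln (real n) > 0"
proof -
  show "ln (real n) \<le> harm (n - 1)" using ln_le_harm[of "n - 1"] n by (simp add: of_nat_diff)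
  have "harm (n - 1) - ln (real (n - 1)) \<le> harm 1 - ln (real 1 :: real)"
    by (rule euler_mascheroni_sequence_decreasing) (use n in auto)
  moreover have "ln (real (n - 1)) \<le> ln (real n)" using n by simp
  ultimately show "harm (n - 1) \<le> 1 + ln (real n)" by (simp add: harm_def)
  have "harm n - ln (real n) \<le> harm 1 - ln (real 1 :: real)"
    by (rule euler_mascheroni_sequence_decreasing) (use n in auto)
  thus "harm n \<le> 1 + ln (real n)" by (simp add: harm_def)
  have "ln (sqrt (real n)) \<le> sqrt (real n) - 1" by (rule ln_le_minus_one) (use n in simp)
  hence l: "ln (real n) \<le> 2 * sqrt (real n)" using ln_sqrt[of "real n"] by simp
  show lpos: "ln (real n) > 0" using n by simp
  have "ln (real n) ^ 2 \<le> (2 * sqrt (real n)) ^ 2" using l lpos by (intro power_mono) auto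
  thus "ln (real n) ^ 2 \<le> 4 * real n" by (simp add: power_mult_distrib)
  show "ln (real n) \<le> real n" using ln_le_minus_one[of "real n"] n by simp
qed

lemma gamma_bound:
  fixes E h L :: real
  assumes L1: "L \<ge> 1" and Lh: "L \<le> h" and hL: "h \<le> 1 + L"
      and Eu: "E \<le> h ^ k / fact k" and El: "h ^ k / fact k - 2 * real k ^ 2 * (1 + h) ^ (k - 1) \<le> E"
  shows "\<bar>E * fact k / L ^ k - 1\<bar> \<le> (real k * 2 ^ k + 2 * real k ^ 2 * fact k * 3 ^ k) / L"
proof -
  have L0: "L > 0" using L1 by simp
  have Lk: "L ^ k > 0" using L0 by simp
  have fk: "fact k > (0::real)" by simp
  have u1: "E * fact k / L ^ k \<le> (h / L) ^ k"
    using Eu fk Lk L0 by (simp add: field_simps power_divide)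
  have A: "(h / L) ^ k \<le> (1 + 1 / L) ^ k"
    using Lh hL L0 by (intro power_mono) (auto simp: field_simps)
  have B: "(1 + 1 / L) ^ k - 1 ^ k \<le> real k * ((1 + 1 / L) - 1) * (1 + 1 / L) ^ (k - 1)"
    by (rule S1) (use L0 in auto)
  have C: "(1 + 1 / L) ^ (k - 1) \<le> 2 ^ k"
  proof -
    have "(1 + 1 / L) ^ (k - 1) \<le> 2 ^ (k - 1)" using L1 by (intro power_mono) (auto simp: field_simps)
    also have "(2::real) ^ (k - 1) \<le> 2 ^ k" by (intro power_increasing) auto
    finally show ?thesis .
  qed
  have D: "real k * (1 / L) * (1 + 1 / L) ^ (k - 1) \<le> real k * (1 / L) * 2 ^ k"
    using C L0 by (intro mult_left_mono) auto
  have "(h / L) ^ k - 1 \<le> real k * (1 / L) * 2 ^ k" using A B D by simp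
  hence U: "E * fact k / L ^ k - 1 \<le> (real k * 2 ^ k) / L" using u1 by simp
  have "1 \<le> (h / L) ^ k" using Lh L0 by (intro one_le_power) (simp add: field_simps)
  also have "(h / L) ^ k = h ^ k / fact k * fact k / L ^ k" using fk by (simp add: power_divide)
  finally have l1: "1 \<le> h ^ k / fact k * fact k / L ^ k" .
  have l2: "2 * real k ^ 2 * (1 + h) ^ (k - 1) * fact k / L ^ k \<le> 2 * real k ^ 2 * fact k * 3 ^ k / L"
  proof (cases "k = 0")
    case True thus ?thesis by simp
  next
    case False
    have "(1 + h) ^ (k - 1) \<le> (3 * L) ^ (k - 1)" using hL L1 Lh by (intro power_mono) auto
    also have "\<dots> = 3 ^ (k - 1) * L ^ (k - 1)" by (simp add: power_mult_distrib)
    finally have a: "(1 + h) ^ (k - 1) \<le> 3 ^ (k - 1) * L ^ (k - 1)" .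
    have "L ^ k = L * L ^ (k - 1)" using False by (cases k) auto
    hence b: "(1 + h) ^ (k - 1) / L ^ k \<le> 3 ^ (k - 1) / L"
      using a L0 by (simp add: field_simps)
    have c: "(3::real) ^ (k - 1) \<le> 3 ^ k" by (intro power_increasing) auto
    have "2 * real k ^ 2 * (1 + h) ^ (k - 1) * fact k / L ^ k = (2 * real k ^ 2 * fact k) * ((1 + h) ^ (k - 1) / L ^ k)"
      by simp
    also have "\<dots> \<le> (2 * real k ^ 2 * fact k) * (3 ^ k / L)"
    proof (intro mult_left_mono)
      have "(3::real) ^ (k - 1) / L \<le> 3 ^ k / L" using c L0 by (intro divide_right_mono) auto
      thus "(1 + h) ^ (k - 1) / L ^ k \<le> 3 ^ k / L" using b by linarith
    qed auto
    finally show ?thesis by simp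
  qed
  have "E * fact k / L ^ k \<ge> (h ^ k / fact k - 2 * real k ^ 2 * (1 + h) ^ (k - 1)) * fact k / L ^ k"
    using El fk Lk by (intro divide_right_mono mult_right_mono) auto
  also have "(h ^ k / fact k - 2 * real k ^ 2 * (1 + h) ^ (k - 1)) * fact k / L ^ k =
        h ^ k / fact k * fact k / L ^ k - 2 * real k ^ 2 * (1 + h) ^ (k - 1) * fact k / L ^ k"
    by (simp only: left_diff_distrib diff_divide_distrib)
  finally have Lo: "1 - E * fact k / L ^ k \<le> 2 * real k ^ 2 * fact k * 3 ^ k / L" using l1 l2 by linarith
  have "0 \<le> real k * 2 ^ k / L" "0 \<le> 2 * real k ^ 2 * fact k * 3 ^ k / L" using L0 by auto
  thus ?thesis using U Lo by (simp add: abs_le_iff add_divide_distrib)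
qed

lemma combine:
  fixes \<alpha> \<beta> \<gamma> a b c :: real
  assumes "1 \<le> \<alpha>" "\<alpha> \<le> 1 + a" "0 \<le> \<beta>" "\<beta> \<le> 1" "1 - b \<le> \<beta>" "\<bar>\<gamma> - 1\<bar> \<le> c" "c \<le> 1/2"
  shows "\<bar>\<alpha> * \<beta> / \<gamma> - 1\<bar> \<le> 2 * (a + b + c)"
proof -
  have g1: "\<gamma> - 1 \<le> c" "1 - \<gamma> \<le> c" using assms(6) by (simp_all add: abs_le_iff)
  have g: "\<gamma> \<ge> 1/2" using g1 assms(7) by linarith
  have e: "\<alpha> * \<beta> - \<gamma> = (\<alpha> - 1) * \<beta> + (\<beta> - 1) + (1 - \<gamma>)" by (simp add: algebra_simps)
  have p0: "0 \<le> (\<alpha> - 1) * \<beta>" using assms(1,3) by simp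
  have "(\<alpha> - 1) * \<beta> \<le> (\<alpha> - 1) * 1" using assms(1,4) by (intro mult_left_mono) auto
  hence p1: "(\<alpha> - 1) * \<beta> \<le> a" using assms(2) by simp
  have s0: "0 \<le> a + b + c" using p0 p1 g1 assms(4,5) by linarith
  have "\<bar>\<alpha> * \<beta> - \<gamma>\<bar> \<le> a + b + c" unfolding e abs_le_iff using p0 p1 g1 assms(4,5) by linarith
  moreover have "\<alpha> * \<beta> / \<gamma> - 1 = (\<alpha> * \<beta> - \<gamma>) / \<gamma>" using g by (simp add: field_simps)
  ultimately have "\<bar>\<alpha> * \<beta> / \<gamma> - 1\<bar> \<le> (a + b + c) / \<gamma>"
    using g by (simp add: divide_right_mono)
  also have "\<dots> \<le> (a + b + c) / (1/2)"
    using g s0 by (intro divide_left_mono) auto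
  finally show ?thesis by simp
qed


lemma VD_bound:
  assumes n: "n \<ge> 2 * m" "n \<ge> 2" and m: "m \<ge> 1" and L1: "ln (real n) \<ge> 1"
  shows "Vn n m * ln (real n) \<le> (12 * real m * fact (m - 1) * fact m * 4 ^ (m - 1)) * Dn n m"
proof -
  let ?L = "ln (real n)"
  define k where "k = m - 1"
  have mk: "m = Suc k" using m unfolding k_def by simp
  have n1: "n \<ge> 1" using n by simp
  have lf: "?L \<le> real n" "?L ^ 2 \<le> 4 * real n" "harm n \<le> 1 + ?L" using ln_facts[OF n(2)] by auto
  have Dc: "Dn n m = fact n * real ((n - 1) choose k) / fact m"
    using D_closed[OF n1 m] unfolding k_def by (simp add: field_simps)
  have kn: "k \<le> n - 1" using n unfolding k_def by simp
  have Dlow: "fact n * (real n / 2) ^ k / (fact k * fact m) \<le> Dn n m"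
  proof -
    have "(n - 1 + 1 - k) ^ k \<le> fact k * ((n - 1) choose k)" by (rule choose_ge) (use kn in simp)
    hence "real ((n - k) ^ k) \<le> real (fact k * ((n - 1) choose k))" using n1 by (simp only: of_nat_le_iff) simp
    hence a: "real (n - k) ^ k \<le> fact k * real ((n - 1) choose k)" by simp
    have "real n / 2 \<le> real (n - k)" using n kn unfolding k_def by (simp add: of_nat_diff)
    hence "(real n / 2) ^ k \<le> real (n - k) ^ k" by (intro power_mono) auto
    hence "(real n / 2) ^ k \<le> fact k * real ((n - 1) choose k)" using a by linarith
    hence "fact n * (real n / 2) ^ k / (fact k * fact m) \<le> fact n * (fact k * real ((n - 1) choose k)) / (fact k * fact m)"
      by (intro divide_right_mono mult_left_mono) auto
    also have "\<dots> = Dn n m" unfolding Dc by simp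
    finally show ?thesis .
  qed
  have cvD: "12 * real m * 2 ^ k * fact n * real n ^ k \<le> (12 * real m * fact (m - 1) * fact m * 4 ^ (m - 1)) * Dn n m"
  proof -
    have p: "(real n / 2) ^ k * 4 ^ k = 2 ^ k * real n ^ k"
    proof -
      have "(real n / 2) ^ k * 4 ^ k = (real n / 2 * 4) ^ k" by (rule power_mult_distrib[symmetric])
      also have "real n / 2 * 4 = 2 * real n" by simp
      finally show ?thesis by (simp only: power_mult_distrib)
    qed
    have fkm: "fact k * fact m \<noteq> (0::real)" by simp
    have "(12 * real m * fact k * fact m * 4 ^ k) * (fact n * (real n / 2) ^ k / (fact k * fact m))
        = 12 * real m * fact n * ((real n / 2) ^ k * 4 ^ k) * ((fact k * fact m) / (fact k * fact m))"
      by (simp only: times_divide_eq_right mult_ac)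
    also have "\<dots> = 12 * real m * 2 ^ k * fact n * real n ^ k" unfolding p using fkm by simp
    finally have eqn: "(12 * real m * fact k * fact m * 4 ^ k) * (fact n * (real n / 2) ^ k / (fact k * fact m)) = 12 * real m * 2 ^ k * fact n * real n ^ k" .
    have "12 * real m * 2 ^ k * fact n * real n ^ k = (12 * real m * fact k * fact m * 4 ^ k) * (fact n * (real n / 2) ^ k / (fact k * fact m))"
      using eqn by (rule sym)
    also have "\<dots> \<le> (12 * real m * fact k * fact m * 4 ^ k) * Dn n m"
      using Dlow by (intro mult_left_mono) auto
    finally show ?thesis unfolding k_def by simp
  qed
  show ?thesis
  proof (cases "k = 0")
    case True
    hence m1: "m = 1" using mk by simp
    have "real n * Vn n 1 = fact n" by (rule V1[OF n1])
    hence "Vn n 1 * ?L \<le> fact n"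
      using lf(1) Vn_nonneg[of n 1] n1 by (metis mult.commute mult_left_mono)
    also have "\<dots> \<le> 12 * real m * 2 ^ k * fact n * real n ^ k" using True m1 by simp
    finally have "Vn n 1 * ?L \<le> 12 * real m * 2 ^ k * fact n * real n ^ k" .
    thus ?thesis using cvD unfolding m1 by linarith
  next
    case False
    have m2: "m \<ge> 2" using False mk by simp
    have "Vn n m \<le> real m * fact n * real (n + 1) ^ (m - 2) * (1 + harm n)" by (rule V_bound[OF m2])
    also have "\<dots> \<le> real m * fact n * (2 * real n) ^ (k - 1) * (3 * ?L)"
    proof (intro mult_mono mult_left_mono)
      have e: "m - 2 = k - 1" unfolding mk by simp
      show "real (n + 1) ^ (m - 2) \<le> (2 * real n) ^ (k - 1)" unfolding e using n1 by (intro power_mono) auto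
      show "1 + harm n \<le> 3 * ?L" using lf(3) L1 by linarith
    qed (use L1 harm_nonneg[of n, where 'a=real] in auto)
    finally have "Vn n m * ?L \<le> real m * fact n * (2 * real n) ^ (k - 1) * (3 * ?L) * ?L"
      using L1 by (intro mult_right_mono) auto
    also have "\<dots> = 3 * real m * fact n * (2 * real n) ^ (k - 1) * ?L ^ 2" by (simp add: power2_eq_square)
    also have "\<dots> \<le> 3 * real m * fact n * (2 * real n) ^ (k - 1) * (4 * real n)"
      using lf(2) by (intro mult_left_mono) auto
    also have "\<dots> = 12 * real m * fact n * (2 ^ (k - 1) * (real n ^ (k - 1) * real n))"
      by (simp add: power_mult_distrib)
    also have "real n ^ (k - 1) * real n = real n ^ k" using False by (cases k) auto
    also have "(2::real) ^ (k - 1) \<le> 2 ^ k" by (intro power_increasing) auto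
    hence "12 * real m * fact n * (2 ^ (k - 1) * real n ^ k) \<le> 12 * real m * fact n * (2 ^ k * real n ^ k)"
      by (intro mult_left_mono mult_right_mono) auto
    finally have "Vn n m * ?L \<le> 12 * real m * 2 ^ k * fact n * real n ^ k" by (simp add: algebra_simps)
    thus ?thesis using cvD by linarith
  qed
qed


lemma main_bound:
  fixes \<theta> :: real
  assumes \<theta>: "\<theta> > 0" and m: "m \<ge> 1" and n: "n \<ge> 2 * m" "n \<ge> 2"
      and L1: "ln (real n) \<ge> 1"
      and Lg: "ln (real n) \<ge> 2 * (real (m - 1) * 2 ^ (m - 1) + 2 * real (m - 1) ^ 2 * fact (m - 1) * 3 ^ (m - 1))"
  shows "\<bar>cond_exp_invol \<theta> n m / (real n ^ m / (fact m * ln (real n) ^ (m - 1))) - 1\<bar> \<le>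
         2 * (real m ^ m * (12 * real m * fact (m - 1) * fact m * 4 ^ (m - 1)) + real (m - 1) ^ 2 +
              (real (m - 1) * 2 ^ (m - 1) + 2 * real (m - 1) ^ 2 * fact (m - 1) * 3 ^ (m - 1))) / ln (real n)"
proof -
  define k where "k = m - 1"
  have mk: "m = Suc k" using m unfolding k_def by simp
  define L where "L = ln (real n)"
  define cg where "cg = real k * 2 ^ k + 2 * real k ^ 2 * fact k * 3 ^ k"
  define cv where "cv = 12 * real m * fact (m - 1) * fact m * 4 ^ (m - 1)"
  have n1: "n \<ge> 1" using n by simp
  have L0: "L > 0" using L1 unfolding L_def by simp
  have lf: "L \<le> harm (n - 1)" "harm (n - 1) \<le> 1 + L" "L \<le> real n"
    using ln_facts[OF n(2)] unfolding L_def by auto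
  define E where "E = Ef n k"
  define Cc where "Cc = (n - 1) choose k"
  have kn: "k \<le> n - 1" using n unfolding k_def by simp
  have Cc1: "Cc \<ge> 1" unfolding Cc_def using kn by (simp add: Suc_leI)
  define \<gamma> where "\<gamma> = E * fact k / L ^ k"
  have Eb: "E \<le> harm (n - 1) ^ k / fact k" "harm (n - 1) ^ k / fact k - 2 * real k ^ 2 * (1 + harm (n - 1)) ^ (k - 1) \<le> E"
    using E_bounds[OF n1, of k] unfolding E_def by auto
  have gam: "\<bar>\<gamma> - 1\<bar> \<le> cg / L"
    unfolding \<gamma>_def cg_def by (rule gamma_bound[OF _ lf(1) lf(2) Eb]) (use L1 L_def in simp)
  have cgL: "cg / L \<le> 1/2" using Lg L0 unfolding cg_def L_def k_def by (simp add: field_simps)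
  have g_pos: "\<gamma> > 0"
  proof -
    have "1 - \<gamma> \<le> cg / L" using gam by (simp add: abs_le_iff)
    thus ?thesis using cgL by linarith
  qed
  have E_pos: "E > 0" using g_pos L0 unfolding \<gamma>_def by (simp add: zero_less_divide_iff zero_less_mult_iff)
  have Bn_eq: "Bn n m = fact (n - 1) * E" unfolding E_def Ef_def mk by simp
  have Dc: "Dn n m = fact n * real Cc / fact m"
    using D_closed[OF n1 m] unfolding Cc_def k_def by (simp add: field_simps)
  have D_pos: "Dn n m > 0" unfolding Dc using Cc1 by simp
  define \<alpha> where "\<alpha> = As n m / Dn n m"
  have a1: "1 \<le> \<alpha>" unfolding \<alpha>_def using A_bounds(1)[of n m] D_pos by simp
  have VD: "Vn n m / Dn n m \<le> cv / L"
  proof -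
    have "Vn n m * L \<le> cv * Dn n m" using VD_bound[OF n m L1] unfolding cv_def L_def .
    thus ?thesis using D_pos L0 by (simp add: field_simps)
  qed
  have a2: "\<alpha> \<le> 1 + real m ^ m * cv / L"
  proof -
    have "\<alpha> \<le> (Dn n m + real m ^ m * Vn n m) / Dn n m"
      unfolding \<alpha>_def using A_bounds(2)[of n m] D_pos by (intro divide_right_mono) auto
    also have "\<dots> = 1 + real m ^ m * (Vn n m / Dn n m)" using D_pos by (simp add: field_simps)
    also have "\<dots> \<le> 1 + real m ^ m * (cv / L)" using VD by (intro add_left_mono mult_left_mono) auto
    finally show ?thesis by simp
  qed
  define \<beta> where "\<beta> = fact k * real Cc / real n ^ k"
  have b0: "0 \<le> \<beta>" unfolding \<beta>_def by simp
  have b1: "\<beta> \<le> 1"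
  proof -
    have "fact k * Cc \<le> (n - 1) ^ k" unfolding Cc_def by (rule fact_choose_le)
    also have "\<dots> \<le> n ^ k" by (intro power_mono) auto
    finally have "fact k * real Cc \<le> real n ^ k" by (metis of_nat_fact of_nat_le_iff of_nat_mult of_nat_power)
    thus ?thesis unfolding \<beta>_def using n1 by (simp add: divide_le_eq)
  qed
  have b2: "1 - real k ^ 2 / L \<le> \<beta>"
  proof -
    have "(n - 1 + 1 - k) ^ k \<le> fact k * Cc" unfolding Cc_def by (rule choose_ge) (use kn in simp)
    hence a: "real (n - k) ^ k \<le> fact k * real Cc" using n1
      by (metis Nat.add_diff_assoc2 le_add_diff_inverse2 of_nat_fact of_nat_le_iff of_nat_mult of_nat_power)
    have knr: "real k / real n \<le> 1" using kn n1 by simp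
    have "1 + real k * (- (real k / real n)) \<le> (1 + (- (real k / real n))) ^ k"
      by (rule Bernoulli_inequality) (use knr in simp)
    also have "1 + (- (real k / real n)) = real (n - k) / real n" using kn n1 by (simp add: of_nat_diff field_simps)
    also have "(real (n - k) / real n) ^ k = real (n - k) ^ k / real n ^ k" by (simp add: power_divide)
    also have "\<dots> \<le> \<beta>" unfolding \<beta>_def using a n1 by (intro divide_right_mono) auto
    finally have "1 - real k ^ 2 / real n \<le> \<beta>" by (simp add: power2_eq_square)
    moreover have "real k ^ 2 / real n \<le> real k ^ 2 / L" using lf(3) L0 by (intro divide_left_mono) auto
    ultimately show ?thesis by linarith
  qed
  have comb: "\<bar>\<alpha> * \<beta> / \<gamma> - 1\<bar> \<le> 2 * (real m ^ m * cv / L + real k ^ 2 / L + cg / L)"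
    by (rule combine[OF a1 a2 b0 b1 b2 gam cgL])
  have ident: "cond_exp_invol \<theta> n m / (real n ^ m / (fact m * L ^ k)) = \<alpha> * \<beta> / \<gamma>"
  proof -
    have nz: "real n \<noteq> 0" "L \<noteq> 0" "E \<noteq> 0" "real Cc \<noteq> 0" "fact k \<noteq> (0::real)" "fact m \<noteq> (0::real)"
      "fact (n - 1) \<noteq> (0::real)" using n1 L0 E_pos Cc1 by auto
    have fn: "(fact n :: real) = real n * fact (n - 1)" by (rule fact_pred[OF n1])
    have nm: "real n ^ m = real n * real n ^ k" unfolding mk by simp
    have "cond_exp_invol \<theta> n m = As n m / (fact (n - 1) * E)" using cond_exp_eq[OF \<theta>] Bn_eq by simp
    thus ?thesis unfolding \<alpha>_def \<beta>_def \<gamma>_def Dc fn nm using nz by (simp add: field_simps)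
  qed
  have "2 * (real m ^ m * cv / L + real k ^ 2 / L + cg / L) = 2 * (real m ^ m * cv + real k ^ 2 + cg) / L"
    using L0 by (simp add: field_simps)
  thus ?thesis using comb ident unfolding L_def cg_def cv_def k_def by simp
qed


theorem theorem2p2:
  fixes \<theta> :: real and m :: nat
  assumes "\<theta> > 0" and "m \<ge> 1"
  shows "(\<lambda>n. cond_exp_invol \<theta> n m /
            (real n ^ m / (fact m * ln (real n) ^ (m - 1))) - 1)
         \<in> O(\<lambda>n. 1 / ln (real n))"
proof -
  define cg where "cg = (real (m - 1) * 2 ^ (m - 1) + 2 * real (m - 1) ^ 2 * fact (m - 1) * 3 ^ (m - 1))"
  define C where "C = 2 * (real m ^ m * (12 * real m * fact (m - 1) * fact m * 4 ^ (m - 1)) + real (m - 1) ^ 2 + cg)"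
  have lnlim: "filterlim (\<lambda>n::nat. ln (real n)) at_top at_top"
    using filterlim_compose[OF ln_at_top filterlim_real_sequentially] by (simp add: o_def)
  have e1: "eventually (\<lambda>n::nat. ln (real n) \<ge> 1) at_top"
    using lnlim unfolding filterlim_at_top by blast
  have e2: "eventually (\<lambda>n::nat. ln (real n) \<ge> 2 * cg) at_top"
    using lnlim unfolding filterlim_at_top by blast
  have ev: "eventually (\<lambda>n::nat. n \<ge> 2 * m \<and> n \<ge> 2 \<and> ln (real n) \<ge> 1 \<and> ln (real n) \<ge> 2 * cg) at_top"
    using eventually_ge_at_top[of "2 * m"] eventually_ge_at_top[of 2] e1 e2
    by (intro eventually_conj) auto
  show ?thesis
  proof (rule bigoI[where c = C])
    show "eventually (\<lambda>n. norm (cond_exp_invol \<theta> n m /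
            (real n ^ m / (fact m * ln (real n) ^ (m - 1))) - 1) \<le> C * norm (1 / ln (real n))) at_top"
      using ev
    proof eventually_elim
      case (elim n)
      have lp: "ln (real n) > 0" using elim by simp
      have "\<bar>cond_exp_invol \<theta> n m / (real n ^ m / (fact m * ln (real n) ^ (m - 1))) - 1\<bar> \<le> C / ln (real n)"
        using main_bound[OF assms, of n] elim unfolding C_def cg_def by simp
      thus ?case using lp by simp
    qed
  qed
qed


end
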